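(* Consider a SOCO problem with a one-dimensional decision space and a norm $\|\cdot\|$ on $\mathbb{R}$. Let $\theta\ge1$ and let $N$ be the norm on $\mathbb{R}$ with $N(1)=\theta\|1\|$ (i.e. $N(x)=\theta\|x\|$). Then the algorithm RBG($N$) attains $\alpha$-unfair competitive ratio $CR_1^\alpha$ at most $(1+\theta)/\min\{\theta,\alpha\}$ (for every $\alpha\ge1$) and regret $R'_0$ of $O(\max\{T/\theta,\theta\})$.
   Context: Setting: the decision space is a compact interval $F=[x_L,x_H]\subseteq\mathbb{R}^+$, $\|\cdot\|$ is a norm on $\mathbb{R}$, and the cost functions $c^t:F\to\mathbb{R}^+$ are convex with subgradients uniformly bounded over the sequence, and bounded above by a constant independent of $T$. An online (possibly randomized) algorithm produces $x^1,x^2,\dots\in F$ with $x^s$ depending only on $c^1,\dots,c^{s-1}$ and internal randomness. For $\alpha\ge0$ and lookahead $i$, $C_i^\alpha(A)=\mathbb{E}\big[\sum_{t=1}^T c^t(x^{t+i})+\alpha\|x^{t+i}-x^{t+i-1}\|\big]$ with initial action $x^i=0$; $C_i=C_i^1$. $OPT_s=\min_{x\in F}\sum_{t=1}^T c^t(x)$; $OPT_d^\alpha=\min_{x\in F^T}\sum_{t=1}^T c^t(x^t)+\alpha\|x^t-x^{t-1}\|$ with $x^0=0$. The regret $R'_0(A)$ is (at most) $\rho(T)$ if $C_0^1(A)-OPT_s\le\rho(T)$ for every cost sequence; the $\alpha$-unfair competitive ratio $CR_1^\alpha(A)$ is (at most) $\rho$ if $C_1(A)\le\rho\,OPT_d^\alpha+O(1)$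 for every cost sequence. Algorithm RBG($N$) (Randomly Biased Greedy): define the work function $w^0(x)=N(x)$ and $w^t(x)=\min_{y\in F}\{w^{t-1}(y)+c^t(y)+N(x-y)\}$ for $x\in F$; draw a single random number $r$ uniformly from $(-1,1)$; at each time step $t$, choose $x^t\in F$ minimizing $Y^t(x)=w^{t-1}(x)+rN(x)$. *)

theory Defs
  imports "HOL-Analysis.Analysis"
begin

definition is_norm_real :: "(real \<Rightarrow> real) \<Rightarrow> bool" where
  "is_norm_real nrm \<longleftrightarrow>
     (\<forall>x. 0 \<le> nrm x) \<and> (\<forall>x. nrm x = 0 \<longleftrightarrow> x = 0) \<and>
     (\<forall>a x. nrm (a * x) = \<bar>a\<bar> * nrm x) \<and>
     (\<forall>x y. nrm (x + y) \<le> nrm x + nrm y)"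

definition is_subgradient :: "real set \<Rightarrow> (real \<Rightarrow> real) \<Rightarrow> real \<Rightarrow> real \<Rightarrow> bool" where
  "is_subgradient F f x g \<longleftrightarrow> (\<forall>y\<in>F. f x + g * (y - x) \<le> f y)"

text \<open>Admissible cost sequence on F = [xL, xH]: convex, nonnegative, bounded above by B,
  with subgradients bounded by G (uniformly in t). Costs are indexed by t = 1, 2, ...\<close>
definition soco_costs :: "real \<Rightarrow> real \<Rightarrow> real \<Rightarrow> real \<Rightarrow> (nat \<Rightarrow> real \<Rightarrow> real) \<Rightarrow> bool" where
  "soco_costs xL xH G B c \<longleftrightarrow>
     (\<forall>t. convex_on {xL..xH} (c t) \<and>
          (\<forall>x\<in>{xL..xH}. 0 \<le> c t x \<and> c t x \<le> B) \<and>
          (\<forall>x\<in>{xL..xH}. \<exists>g. \<bar>g\<bar> \<le> G \<and> is_subgradient {xL..xH} (c t) x g))"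

primrec rbg_work :: "(real \<Rightarrow> real) \<Rightarrow> real set \<Rightarrow> (nat \<Rightarrow> real \<Rightarrow> real) \<Rightarrow> nat \<Rightarrow> real \<Rightarrow> real" where
  "rbg_work N F c 0 = (\<lambda>x. N x)"
| "rbg_work N F c (Suc t) =
     (\<lambda>x. Inf ((\<lambda>y. rbg_work N F c t y + c (Suc t) y + N (x - y)) ` F))"

definition rbg_run :: "(real \<Rightarrow> real) \<Rightarrow> real set \<Rightarrow> (nat \<Rightarrow> real \<Rightarrow> real) \<Rightarrow> (real \<Rightarrow> nat \<Rightarrow> real) \<Rightarrow> bool" where
  "rbg_run N F c x \<longleftrightarrow>
     (\<forall>r\<in>{-1<..<1}. \<forall>t\<ge>1. x r t \<in> F \<and>
        (\<forall>z\<in>F. rbg_work N F c (t - 1) (x r t) + r * N (x r t)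
               \<le> rbg_work N F c (t - 1) z + r * N z))"

definition expect_r :: "(real \<Rightarrow> real) \<Rightarrow> real" where
  "expect_r f = integral\<^sup>L (uniform_measure lborel {-1<..<1}) f"

text \<open>Cost C_i^alpha with lookahead i in {0,1}; the action before x^{1+i} is the initial action 0.\<close>
definition cost_la :: "nat \<Rightarrow> real \<Rightarrow> (real \<Rightarrow> real) \<Rightarrow> (nat \<Rightarrow> real \<Rightarrow> real) \<Rightarrow> nat \<Rightarrow> (real \<Rightarrow> nat \<Rightarrow> real) \<Rightarrow> real" where
  "cost_la i \<alpha> nrm c T x = expect_r (\<lambda>r.
     \<Sum>t=1..T. c t (x r (t + i)) + \<alpha> * nrm (x r (t + i) - (if t = 1 then 0 else x r (t + i - 1))))"

definition OPT_s :: "real set \<Rightarrow> (nat \<Rightarrow> real \<Rightarrow> real) \<Rightarrow> nat \<Rightarrow> real" where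
  "OPT_s F c T = Inf ((\<lambda>x. \<Sum>t=1..T. c t x) ` F)"

definition OPT_d :: "real \<Rightarrow> (real \<Rightarrow> real) \<Rightarrow> real set \<Rightarrow> (nat \<Rightarrow> real \<Rightarrow> real) \<Rightarrow> nat \<Rightarrow> real" where
  "OPT_d \<alpha> nrm F c T = Inf {(\<Sum>t=1..T. c t (y t) + \<alpha> * nrm (y t - y (t - 1))) | y.
                                y 0 = 0 \<and> (\<forall>t\<in>{1..T}. y t \<in> F)}"

end

theory Submission
  imports Defs
begin


definition LipOn :: "real set \<Rightarrow> real \<Rightarrow> (real \<Rightarrow> real) \<Rightarrow> bool" where
  "LipOn S L f \<longleftrightarrow> (\<forall>x\<in>S. \<forall>y\<in>S. \<bar>f x - f y\<bar> \<le> L * \<bar>x - y\<bar>)"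

lemma LipOn_cont: assumes "LipOn S L f" shows "continuous_on S f"
proof -
  have "(max L 0)-lipschitz_on S f"
  proof (rule lipschitz_onI)
    fix x y assume "x \<in> S" "y \<in> S"
    then have "\<bar>f x - f y\<bar> \<le> L * \<bar>x - y\<bar>" using assms unfolding LipOn_def by blast
    also have "\<dots> \<le> max L 0 * \<bar>x - y\<bar>" by (intro mult_right_mono) auto
    finally show "dist (f x) (f y) \<le> max L 0 * dist x y" by (simp add: dist_real_def)
  qed auto
  then show ?thesis by (rule lipschitz_on_continuous_on)
qed

locale wstep =
  fixes a b s G :: real and f c :: "real \<Rightarrow> real"
  assumes ab: "a \<le> b" and s: "s > 0"
  and fL: "LipOn {a..b} s f" and fC: "convex_on {a..b} f"
  and cC: "convex_on {a..b} c" and cL: "LipOn {a..b} G c"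
  and c0: "\<And>x. x \<in> {a..b} \<Longrightarrow> 0 \<le> c x"
begin

definition g :: "real \<Rightarrow> real" where
  "g x = Inf ((\<lambda>y. f y + c y + s * \<bar>x - y\<bar>) ` {a..b})"

lemma phi_cont: "continuous_on {a..b} (\<lambda>y. f y + c y + s * \<bar>x - y\<bar>)"
  using LipOn_cont[OF fL] LipOn_cont[OF cL]
  by (intro continuous_intros) auto

lemma g_min: obtains y where "y \<in> {a..b}" "g x = f y + c y + s * \<bar>x - y\<bar>"
  and "\<And>z. z \<in> {a..b} \<Longrightarrow> g x \<le> f z + c z + s * \<bar>x - z\<bar>"
proof -
  obtain y where y: "y \<in> {a..b}" "\<forall>z\<in>{a..b}. f y + c y + s * \<bar>x - y\<bar> \<le> f z + c z + s * \<bar>x - z\<bar>"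
    using continuous_attains_inf[OF compact_Icc _ phi_cont, of x] ab by auto
  have "g x = f y + c y + s * \<bar>x - y\<bar>" unfolding g_def
    by (rule cInf_eq_minimum) (use y in auto)
  with y that show ?thesis by auto
qed

lemma g_le: "z \<in> {a..b} \<Longrightarrow> g x \<le> f z + c z + s * \<bar>x - z\<bar>"
  by (rule g_min[of x]) auto

lemma g_le_phi: "x \<in> {a..b} \<Longrightarrow> g x \<le> f x + c x"
  using g_le[of x x] by simp

lemma g_ge_f: assumes "x \<in> {a..b}" shows "f x \<le> g x"
proof -
  obtain y where y: "y \<in> {a..b}" "g x = f y + c y + s * \<bar>x - y\<bar>" by (rule g_min[of x])
  have "\<bar>f x - f y\<bar> \<le> s * \<bar>x - y\<bar>" using fL assms y unfolding LipOn_def by blast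
  with y c0[of y] show ?thesis by linarith
qed

lemma g_Lip: "LipOn {a..b} s g"
  unfolding LipOn_def
proof (intro ballI)
  have *: "g x \<le> g x' + s * \<bar>x - x'\<bar>" for x x'
  proof -
    obtain y where y: "y \<in> {a..b}" "g x' = f y + c y + s * \<bar>x' - y\<bar>" by (rule g_min[of x'])
    have "g x \<le> f y + c y + s * \<bar>x - y\<bar>" by (rule g_le[OF y(1)])
    also have "\<bar>x - y\<bar> \<le> \<bar>x' - y\<bar> + \<bar>x - x'\<bar>" by linarith
    then have "s * \<bar>x - y\<bar> \<le> s * \<bar>x' - y\<bar> + s * \<bar>x - x'\<bar>"
      using s by (metis distrib_left mult_left_mono less_imp_le)
    finally show ?thesis using y by linarith
  qed
  fix x y show "\<bar>g x - g y\<bar> \<le> s * \<bar>x - y\<bar>" using *[of x y] *[of y x] by (simp add: abs_minus_commute)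
qed

lemma g_convex: "convex_on {a..b} g"
proof (rule convex_onI)
  show "convex {a..b}" by simp
  fix t x1 x2 :: real assume t: "0 < t" "t < 1" and x: "x1 \<in> {a..b}" "x2 \<in> {a..b}"
  obtain y1 where y1: "y1 \<in> {a..b}" "g x1 = f y1 + c y1 + s * \<bar>x1 - y1\<bar>" by (rule g_min[of x1])
  obtain y2 where y2: "y2 \<in> {a..b}" "g x2 = f y2 + c y2 + s * \<bar>x2 - y2\<bar>" by (rule g_min[of x2])
  define y where "y = (1 - t) * y1 + t * y2"
  have yin: "y \<in> {a..b}" using y1 y2 t unfolding y_def
    using convexD[OF convex_real_interval(5)[of a b], of y1 y2 "1 - t" t] t by simp
  have "g ((1 - t) * x1 + t * x2) \<le> f y + c y + s * \<bar>(1 - t) * x1 + t * x2 - y\<bar>"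
    by (rule g_le[OF yin])
  also have "f y \<le> (1 - t) * f y1 + t * f y2"
    using convex_onD[OF fC, of t y1 y2] t y1 y2 unfolding y_def by simp
  also have "c y \<le> (1 - t) * c y1 + t * c y2"
    using convex_onD[OF cC, of t y1 y2] t y1 y2 unfolding y_def by simp
  also have "\<bar>(1 - t) * x1 + t * x2 - y\<bar> \<le> (1 - t) * \<bar>x1 - y1\<bar> + t * \<bar>x2 - y2\<bar>"
  proof -
    have "(1 - t) * x1 + t * x2 - y = (1 - t) * (x1 - y1) + t * (x2 - y2)" unfolding y_def by algebra
    also have "\<bar>\<dots>\<bar> \<le> \<bar>(1 - t) * (x1 - y1)\<bar> + \<bar>t * (x2 - y2)\<bar>" by (rule abs_triangle_ineq)
    finally show ?thesis using t by (simp add: abs_mult)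
  qed
  then have "s * \<bar>(1 - t) * x1 + t * x2 - y\<bar> \<le> s * ((1 - t) * \<bar>x1 - y1\<bar> + t * \<bar>x2 - y2\<bar>)"
    using s by (intro mult_left_mono) auto
  finally show "g ((1 - t) *\<^sub>R x1 + t *\<^sub>R x2) \<le> (1 - t) * g x1 + t * g x2"
    using y1 y2 by (simp add: algebra_simps)
qed

lemma g_contact:
  assumes X: "X \<in> {a..b}" and r: "\<bar>r\<bar> < 1"
    and m: "\<And>z. z \<in> {a..b} \<Longrightarrow> g X + r * s * X \<le> g z + r * s * z"
  shows "g X = f X + c X"
proof -
  obtain y where y: "y \<in> {a..b}" "g X = f y + c y + s * \<bar>X - y\<bar>" by (rule g_min[of X])
  have "g X + r * s * X \<le> f y + c y + r * s * y" using m[OF y(1)] g_le_phi[OF y(1)] by linarith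
  then have 1: "s * \<bar>X - y\<bar> + r * s * (X - y) \<le> 0" using y by (simp add: algebra_simps)
  have "r * s * (X - y) \<ge> - (\<bar>r\<bar> * s * \<bar>X - y\<bar>)"
  proof -
    have "\<bar>r * s * (X - y)\<bar> = \<bar>r\<bar> * s * \<bar>X - y\<bar>" using s by (simp add: abs_mult)
    then show ?thesis by linarith
  qed
  with 1 have "(1 - \<bar>r\<bar>) * s * \<bar>X - y\<bar> \<le> 0" by (simp add: algebra_simps)
  moreover have "(1 - \<bar>r\<bar>) * s > 0" using r s by simp
  ultimately have "X = y"
  proof (cases "X = y")
    case False
    then have "\<bar>X - y\<bar> > 0" by simp
    assume "(1 - \<bar>r\<bar>) * s * \<bar>X - y\<bar> \<le> 0" "(1 - \<bar>r\<bar>) * s > 0"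
    then show ?thesis using mult_pos_pos[OF \<open>(1 - \<bar>r\<bar>) * s > 0\<close> \<open>\<bar>X - y\<bar> > 0\<close>] by linarith
  qed
  with y show ?thesis by simp
qed

lemma h_quasi:
  assumes x: "x1 \<in> {a..b}" "x2 \<in> {a..b}" "x1 \<le> x" "x \<le> x2"
  shows "g x - f x \<le> max (g x1 - f x1) (g x2 - f x2)"
proof -
  have xin: "x \<in> {a..b}" using x by auto
  obtain y1 where y1: "y1 \<in> {a..b}" "g x1 = f y1 + c y1 + s * \<bar>x1 - y1\<bar>" by (rule g_min[of x1])
  obtain y2 where y2: "y2 \<in> {a..b}" "g x2 = f y2 + c y2 + s * \<bar>x2 - y2\<bar>" by (rule g_min[of x2])
  have fl: "\<bar>f u - f w\<bar> \<le> s * \<bar>u - w\<bar>" if "u \<in> {a..b}" "w \<in> {a..b}" for u w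
    using fL that unfolding LipOn_def by blast
  show ?thesis
  proof (cases "x \<le> y1")
    case True
    have "g x \<le> f y1 + c y1 + s * \<bar>x - y1\<bar>" by (rule g_le[OF y1(1)])
    also have "\<dots> = g x1 - s * (x - x1)" using y1 True x by (simp add: algebra_simps)
    finally have "g x \<le> g x1 - s * (x - x1)" .
    moreover have "f x1 - f x \<le> s * (x - x1)" using fl[OF x(1) xin] x by simp
    ultimately show ?thesis by linarith
  next
    case F1: False
    show ?thesis
    proof (cases "y2 \<le> x")
      case True
      have "g x \<le> f y2 + c y2 + s * \<bar>x - y2\<bar>" by (rule g_le[OF y2(1)])
      also have "\<dots> = g x2 - s * (x2 - x)" using y2 True x by (simp add: algebra_simps)
      finally have "g x \<le> g x2 - s * (x2 - x)" .
      moreover have "f x2 - f x \<le> s * (x2 - x)" using fl[OF x(2) xin] x by simp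
      ultimately show ?thesis by linarith
    next
      case False
      then have yy: "y1 < x" "x < y2" using F1 by auto
      define t where "t = (x - y1) / (y2 - y1)"
      have t: "0 \<le> t" "t \<le> 1" using yy unfolding t_def by auto
      have te: "t * (y2 - y1) = x - y1" using yy unfolding t_def by simp
      have xe: "x = (1 - t) *\<^sub>R y1 + t *\<^sub>R y2" using te by (simp add: algebra_simps)
      have "c x \<le> (1 - t) * c y1 + t * c y2"
        using convex_onD[OF cC t y1(1) y2(1)] xe by simp
      also have "\<dots> \<le> (1 - t) * max (c y1) (c y2) + t * max (c y1) (c y2)"
        using t by (intro add_mono mult_left_mono) auto
      finally have cx: "c x \<le> max (c y1) (c y2)" by (simp add: algebra_simps)
      have "c y1 \<le> g x1 - f x1" using y1 fl[OF x(1) y1(1)] by linarith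
      moreover have "c y2 \<le> g x2 - f x2" using y2 fl[OF x(2) y2(1)] by linarith
      moreover have "g x - f x \<le> c x" using g_le_phi[OF xin] by linarith
      ultimately show ?thesis using cx by linarith
    qed
  qed
qed

lemma valley:
  obtains v where "v \<in> {a..b}"
    "\<And>x1 x2. a \<le> x1 \<Longrightarrow> x1 \<le> x2 \<Longrightarrow> x2 \<le> v \<Longrightarrow> g x2 - f x2 \<le> g x1 - f x1"
    "\<And>x1 x2. v \<le> x1 \<Longrightarrow> x1 \<le> x2 \<Longrightarrow> x2 \<le> b \<Longrightarrow> g x1 - f x1 \<le> g x2 - f x2"
proof -
  have "continuous_on {a..b} (\<lambda>x. g x - f x)"
    using LipOn_cont[OF g_Lip] LipOn_cont[OF fL] by (intro continuous_intros)
  moreover have "{a..b} \<noteq> {}" using ab by simp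
  ultimately obtain v where v: "v \<in> {a..b}" "\<forall>y\<in>{a..b}. g v - f v \<le> g y - f y"
    using continuous_attains_inf[OF compact_Icc] by blast
  show ?thesis
  proof (rule that[OF v(1)])
    fix x1 x2 assume "a \<le> x1" "x1 \<le> x2" "x2 \<le> v"
    moreover have "x1 \<in> {a..b}" using v(1) \<open>a \<le> x1\<close> \<open>x1 \<le> x2\<close> \<open>x2 \<le> v\<close> by auto
    ultimately have "g x2 - f x2 \<le> max (g x1 - f x1) (g v - f v)" "g v - f v \<le> g x1 - f x1"
      using h_quasi[of x1 v x2] v by auto
    then show "g x2 - f x2 \<le> g x1 - f x1" by linarith
  next
    fix x1 x2 assume "v \<le> x1" "x1 \<le> x2" "x2 \<le> b"
    moreover have "x2 \<in> {a..b}" using v(1) \<open>v \<le> x1\<close> \<open>x1 \<le> x2\<close> \<open>x2 \<le> b\<close> by auto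
    ultimately have "g x1 - f x1 \<le> max (g v - f v) (g x2 - f x2)" "g v - f v \<le> g x2 - f x2"
      using h_quasi[of v x2 x1] v by auto
    then show "g x1 - f x1 \<le> g x2 - f x2" by linarith
  qed
qed

end


lemma mono_ftc:
  fixes X M :: "real \<Rightarrow> real"
  assumes pq: "p \<le> q"
    and mono: "\<And>r1 r2. p \<le> r1 \<Longrightarrow> r1 \<le> r2 \<Longrightarrow> r2 \<le> q \<Longrightarrow> X r2 \<le> X r1"
    and sup: "\<And>r1 r2. r1 \<in> {p..q} \<Longrightarrow> r2 \<in> {p..q} \<Longrightarrow> M r2 \<le> M r1 + (r2 - r1) * X r1"
  shows "(X has_integral (M q - M p)) {p..q}"
proof -
  have "mono_on {p..q} (\<lambda>r. - X r)" using mono by (auto simp: mono_on_def)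
  then have "(\<lambda>r. - X r) integrable_on {p..q}" by (rule integrable_on_mono_on)
  then have int: "X integrable_on {p..q}" using integrable_neg[of "\<lambda>r. - X r"] by simp
  have piece: "\<bar>integral {u..w} X - (M w - M u)\<bar> \<le> (w - u) * (X u - X w)"
    if uw: "p \<le> u" "u \<le> w" "w \<le> q" for u w
  proof -
    have iu: "X integrable_on {u..w}" using integrable_on_subinterval[OF int] uw by auto
    have "integral {u..w} X \<le> integral {u..w} (\<lambda>_. X u)"
      by (rule integral_le[OF iu]) (use mono uw in auto)
    moreover have "integral {u..w} (\<lambda>_. X w) \<le> integral {u..w} X"
      by (rule integral_le[OF _ iu]) (use mono uw in auto)
    moreover have "M w - M u \<le> (w - u) * X u" using sup[of u w] uw by auto
    moreover have "M u \<le> M w + (u - w) * X w" using sup[of w u] uw by auto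
    ultimately show ?thesis using uw by (auto simp: algebra_simps)
  qed
  have main: "\<bar>integral {p..q} X - (M q - M p)\<bar> \<le> (q - p) * (X p - X q) / real n" if n: "n > 0" for n :: nat
  proof -
    define d where "d = (q - p) / real n"
    have d0: "d \<ge> 0" using pq n unfolding d_def by simp
    have ind: "\<bar>integral {p..p + real k * d} X - (M (p + real k * d) - M p)\<bar> \<le> d * (X p - X (p + real k * d))"
      if "k \<le> n" for k
      using that
    proof (induction k)
      case 0 then show ?case by simp
    next
      case (Suc k)
      define u where "u = p + real k * d"
      define w where "w = p + real (Suc k) * d"
      have "real (Suc k) * d \<le> real n * d" using Suc.prems d0 by (intro mult_right_mono) auto
      also have "real n * d = q - p" using n unfolding d_def by simp
      finally have wq: "w \<le> q" unfolding w_def by simp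
      have pu: "p \<le> u" unfolding u_def using d0 by simp
      have uw: "u \<le> w" unfolding u_def w_def using d0 by (simp add: algebra_simps)
      have wu: "w - u = d" unfolding u_def w_def by (simp add: algebra_simps)
      have comb: "integral {p..u} X + integral {u..w} X = integral {p..w} X"
        by (rule Henstock_Kurzweil_Integration.integral_combine[OF pu uw]) (rule integrable_on_subinterval[OF int], use pu uw wq in auto)
      have IH: "\<bar>integral {p..u} X - (M u - M p)\<bar> \<le> d * (X p - X u)"
        using Suc unfolding u_def by simp
      have P: "\<bar>integral {u..w} X - (M w - M u)\<bar> \<le> d * (X u - X w)"
        using piece[OF pu uw wq] wu by simp
      have "\<bar>integral {p..w} X - (M w - M p)\<bar> \<le> d * (X p - X u) + d * (X u - X w)"
        using IH P comb by linarith
      then show ?case unfolding w_def u_def[symmetric] by (simp add: algebra_simps w_def[symmetric])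
    qed
    have "p + real n * d = q" using n unfolding d_def by simp
    with ind[of n] show ?thesis unfolding d_def by (simp add: field_simps)
  qed
  have "integral {p..q} X = M q - M p"
  proof (rule ccontr)
    assume ne: "integral {p..q} X \<noteq> M q - M p"
    define e where "e = \<bar>integral {p..q} X - (M q - M p)\<bar>"
    have e0: "e > 0" using ne unfolding e_def by simp
    define C where "C = (q - p) * (X p - X q)"
    obtain n :: nat where nC: "real n > C / e" using reals_Archimedean2 by blast
    have C0: "C \<ge> 0" unfolding C_def using pq mono[of p q] by simp
    then have n0: "n > 0" using nC e0 by (metis of_nat_0_less_iff divide_nonneg_pos not_less le_less_trans)
    have "e \<le> C / real n" using main[OF n0] unfolding e_def C_def by simp
    then have "e * real n \<le> C" using n0 by (simp add: field_simps)
    moreover have "C < e * real n" using nC e0 by (simp add: field_simps)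
    ultimately show False by linarith
  qed
  with int show ?thesis by (simp add: has_integral_integrable_integral)
qed

definition isMin :: "real \<Rightarrow> (real \<Rightarrow> real) \<Rightarrow> real set \<Rightarrow> real \<Rightarrow> real \<Rightarrow> bool" where
  "isMin s \<phi> S r z \<longleftrightarrow> z \<in> S \<and> (\<forall>w\<in>S. \<phi> z + r * s * z \<le> \<phi> w + r * s * w)"

lemma min_mono:
  assumes s: "s > 0" and m1: "isMin s \<phi> S r1 z1" and m2: "isMin s \<phi> S r2 z2" and r: "r1 < r2"
  shows "z2 \<le> z1"
proof (rule ccontr)
  assume "\<not> z2 \<le> z1"
  then have z: "z2 - z1 > 0" by simp
  have "\<phi> z1 + r1 * s * z1 \<le> \<phi> z2 + r1 * s * z2" using m1 m2 unfolding isMin_def by blast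
  moreover have "\<phi> z2 + r2 * s * z2 \<le> \<phi> z1 + r2 * s * z1" using m1 m2 unfolding isMin_def by blast
  ultimately have "(r2 - r1) * s * (z2 - z1) \<le> 0" by (simp add: algebra_simps)
  moreover have "(r2 - r1) * s * (z2 - z1) > 0" using r s z by simp
  ultimately show False by linarith
qed

lemma piece_integral:
  assumes pq: "p0 \<le> q0" and s: "s > 0" and L: "LipOn {p0..q0} s \<phi>"
    and Y: "\<And>r. r \<in> {-1<..<1} \<Longrightarrow> isMin s \<phi> {p0..q0} r (Y r)"
  shows "(Y has_integral ((\<phi> p0 + s * p0 - \<phi> q0 + s * q0) / s)) {-1..1}"
proof -
  define Ye where "Ye r = (if r \<in> {-1<..<1} then Y r else if r \<le> -1 then q0 else p0)" for r
  have Lp: "\<bar>\<phi> x - \<phi> y\<bar> \<le> s * \<bar>x - y\<bar>" if "x \<in> {p0..q0}" "y \<in> {p0..q0}" for x y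
    using L that unfolding LipOn_def by blast
  have mins: "isMin s \<phi> {p0..q0} r (Ye r)" if "r \<in> {-1..1}" for r
  proof (cases "r \<in> {-1<..<1}")
    case True then show ?thesis using Y unfolding Ye_def by simp
  next
    case False
    then have "r = -1 \<or> r = 1" using that by auto
    then show ?thesis
    proof
      assume r: "r = -1"
      have "\<phi> q0 + r * s * q0 \<le> \<phi> w + r * s * w" if "w \<in> {p0..q0}" for w
        using Lp[of q0 w] that pq r by (auto simp: algebra_simps abs_if split: if_splits)
      then show ?thesis using r pq unfolding Ye_def isMin_def by auto
    next
      assume r: "r = 1"
      have "\<phi> p0 + r * s * p0 \<le> \<phi> w + r * s * w" if "w \<in> {p0..q0}" for w
        using Lp[of p0 w] that pq r by (auto simp: algebra_simps abs_if split: if_splits)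
      then show ?thesis using r pq unfolding Ye_def isMin_def by auto
    qed
  qed
  define M where "M r = \<phi> (Ye r) + r * s * Ye r" for r
  have "((\<lambda>r. s * Ye r) has_integral (M 1 - M (-1))) {-1..1}"
  proof (rule mono_ftc)
    fix r1 r2 :: real assume r: "-1 \<le> r1" "r1 \<le> r2" "r2 \<le> 1"
    show "s * Ye r2 \<le> s * Ye r1"
    proof (cases "r1 = r2")
      case False
      then have "Ye r2 \<le> Ye r1" using min_mono[OF s mins[of r1] mins[of r2]] r by auto
      then show ?thesis using s by simp
    qed simp
  next
    fix r1 r2 :: real assume r: "r1 \<in> {-1..1}" "r2 \<in> {-1..1}"
    have "M r2 \<le> \<phi> (Ye r1) + r2 * s * Ye r1"
      using mins[OF r(2)] mins[OF r(1)] unfolding isMin_def M_def by blast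
    then show "M r2 \<le> M r1 + (r2 - r1) * (s * Ye r1)" unfolding M_def by (simp add: algebra_simps)
  qed simp
  then have "((\<lambda>r. (1 / s) *\<^sub>R (s * Ye r)) has_integral ((1 / s) *\<^sub>R (M 1 - M (-1)))) {-1..1}"
    by (rule has_integral_cmul)
  moreover have "M 1 - M (-1) = \<phi> p0 + s * p0 - \<phi> q0 + s * q0" unfolding M_def Ye_def by simp
  ultimately have "(Ye has_integral ((\<phi> p0 + s * p0 - \<phi> q0 + s * q0) / s)) {-1..1}"
    using s by simp
  then show ?thesis
    by (intro has_integral_spike_finite[of "{-1, 1}" _ Y Ye]) (auto simp: Ye_def)
qed

lemma clamp:
  assumes C: "convex_on {a..b} \<phi>" and v: "v \<in> {a..b}" and m: "isMin s \<phi> {a..b} r z"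
  shows "isMin s \<phi> {a..v} r (min z v)" "isMin s \<phi> {v..b} r (max z v)"
proof -
  have z: "z \<in> {a..b}" and zm: "\<And>w. w \<in> {a..b} \<Longrightarrow> \<phi> z + r * s * z \<le> \<phi> w + r * s * w"
    using m unfolding isMin_def by auto
  have btw: "\<phi> x + r * s * x \<le> \<phi> w + r * s * w"
    if w: "w \<in> {a..b}" and x: "x \<in> {a..b}" and between: "(w \<le> x \<and> x \<le> z) \<or> (z \<le> x \<and> x \<le> w)" for w x
  proof (cases "w = z")
    case True then show ?thesis using between by auto
  next
    case False
    define t where "t = (x - w) / (z - w)"
    have t: "0 \<le> t" "t \<le> 1" using between False unfolding t_def
      by (auto simp: field_simps divide_le_eq_1 zero_le_divide_iff)
    have te: "t * (z - w) = x - w" using False unfolding t_def by simp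
    have xe: "x = (1 - t) *\<^sub>R w + t *\<^sub>R z" using te by (simp add: algebra_simps)
    have "\<phi> x \<le> (1 - t) * \<phi> w + t * \<phi> z" using convex_onD[OF C t w z] xe by simp
    moreover have "r * s * x = r * s * ((1 - t) * w + t * z)" using xe by simp
    then have "r * s * x = (1 - t) * (r * s * w) + t * (r * s * z)" by (simp add: algebra_simps)
    ultimately have "\<phi> x + r * s * x \<le> (1 - t) * (\<phi> w + r * s * w) + t * (\<phi> z + r * s * z)"
      by (simp add: algebra_simps)
    also have "\<dots> \<le> (1 - t) * (\<phi> w + r * s * w) + t * (\<phi> w + r * s * w)"
      using zm[OF w] t by (intro add_left_mono mult_left_mono) auto
    finally show ?thesis by (simp add: algebra_simps)
  qed
  show "isMin s \<phi> {a..v} r (min z v)"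
    unfolding isMin_def
  proof (intro conjI ballI)
    show "min z v \<in> {a..v}" using z v by auto
    fix w assume w: "w \<in> {a..v}"
    show "\<phi> (min z v) + r * s * min z v \<le> \<phi> w + r * s * w"
    proof (cases "z \<le> v")
      case True then show ?thesis using zm[of w] w v by auto
    next
      case False then show ?thesis using btw[of w v] w v z by auto
    qed
  qed
  show "isMin s \<phi> {v..b} r (max z v)"
    unfolding isMin_def
  proof (intro conjI ballI)
    show "max z v \<in> {v..b}" using z v by auto
    fix w assume w: "w \<in> {v..b}"
    show "\<phi> (max z v) + r * s * max z v \<le> \<phi> w + r * s * w"
    proof (cases "v \<le> z")
      case True then show ?thesis using zm[of w] w v by auto
    next
      case False then show ?thesis using btw[of w v] w v z by auto
    qed
  qed
qed

definition ext :: "(real \<Rightarrow> real) \<Rightarrow> real \<Rightarrow> real \<Rightarrow> real \<Rightarrow> real" where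
  "ext Y p q r = (if r \<in> {-1<..<1} then Y r else if r \<le> -1 then q else p)"

lemma ext_countable:
  assumes s: "s > 0" and pq: "p \<le> q" and Y: "\<And>r. r \<in> {-1<..<1} \<Longrightarrow> isMin s \<phi> {p..q} r (Y r)"
  shows "countable {r. \<not> isCont (ext Y p q) r}"
proof -
  have Yin: "r \<in> {-1<..<1} \<Longrightarrow> Y r \<in> {p..q}" for r using Y unfolding isMin_def by blast
  have "mono (\<lambda>r. - ext Y p q r)"
  proof (rule monoI)
    fix r1 r2 :: real assume r: "r1 \<le> r2"
    show "- ext Y p q r1 \<le> - ext Y p q r2"
    proof (cases "r1 = r2")
      case False
      then have lt: "r1 < r2" using r by simp
      show ?thesis
      proof (cases "r1 \<in> {-1<..<1} \<and> r2 \<in> {-1<..<1}")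
        case True
        then show ?thesis using min_mono[OF s Y Y lt] unfolding ext_def by auto
      next
        case False
        then show ?thesis using lt Yin[of r1] Yin[of r2] pq unfolding ext_def by auto
      qed
    qed simp
  qed
  then have "countable {r. \<not> isCont (\<lambda>r. - ext Y p q r) r}" by (rule mono_ctble_discont)
  moreover have "isCont (ext Y p q) r" if "isCont (\<lambda>r. - ext Y p q r) r" for r
  proof -
    have "isCont (\<lambda>x. - (- ext Y p q x)) r" using that by (rule isCont_minus)
    then show ?thesis by simp
  qed
  ultimately show ?thesis by (metis (mono_tags, lifting) countable_subset mem_Collect_eq subsetI)
qed

lemma order_left:
  assumes s: "s > 0"
    and hmon: "\<And>x1 x2. a \<le> x1 \<Longrightarrow> x1 \<le> x2 \<Longrightarrow> x2 \<le> v \<Longrightarrow> g x2 - f x2 \<le> g x1 - f x1"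
    and Yf: "\<And>r. r \<in> {-1<..<1} \<Longrightarrow> isMin s f {a..v} r (Yf r)"
    and Yg: "\<And>r. r \<in> {-1<..<1} \<Longrightarrow> isMin s g {a..v} r (Yg r)"
    and r: "r \<in> {-1<..<1}" and cont: "isCont (ext Yf a v) r"
  shows "Yf r \<le> Yg r"
proof (rule ccontr)
  assume "\<not> Yf r \<le> Yg r"
  then have lt: "Yg r < Yf r" by simp
  define z where "z = Yg r"
  define y where "y = Yf r"
  have zin: "z \<in> {a..v}" and yin: "y \<in> {a..v}" using Yf[OF r] Yg[OF r] unfolding isMin_def z_def y_def by auto
  have 1: "g z + r * s * z \<le> g y + r * s * y" using Yg[OF r] yin unfolding isMin_def z_def by blast
  have 2: "f y + r * s * y \<le> f w + r * s * w" if "w \<in> {a..v}" for w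
    using Yf[OF r] that unfolding isMin_def y_def by blast
  have 3: "g y - f y \<le> g z - f z" using hmon[of z y] zin yin lt unfolding z_def y_def by auto
  have zmin: "isMin s f {a..v} r z"
    unfolding isMin_def using zin 1 2 3 by fastforce
  have "(ext Yf a v \<longlongrightarrow> ext Yf a v r) (at_right r)"
    using cont by (simp add: isCont_def filterlim_at_split)
  moreover have "ext Yf a v r = y" using r unfolding ext_def y_def by simp
  ultimately have "eventually (\<lambda>r'. z < ext Yf a v r') (at_right r)"
    using lt order_tendstoD(1) unfolding z_def y_def by metis
  moreover have "eventually (\<lambda>r'. r' \<in> {r<..<1}) (at_right r)"
    using r by (intro eventually_at_right_real) auto
  ultimately have "eventually (\<lambda>r'. z < ext Yf a v r' \<and> r' \<in> {r<..<1}) (at_right r)"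
    by (rule eventually_conj)
  then obtain r' where r': "z < ext Yf a v r'" "r' \<in> {r<..<1}"
    by (metis (no_types, lifting) eventually_happens' trivial_limit_at_right_real)
  have r'i: "r' \<in> {-1<..<1}" using r r' by auto
  have "Yf r' \<le> z" using min_mono[OF s zmin Yf[OF r'i]] r' by auto
  then show False using r' r'i unfolding ext_def by auto
qed

lemma order_right:
  assumes s: "s > 0"
    and hmon: "\<And>x1 x2. v \<le> x1 \<Longrightarrow> x1 \<le> x2 \<Longrightarrow> x2 \<le> b \<Longrightarrow> g x1 - f x1 \<le> g x2 - f x2"
    and Yf: "\<And>r. r \<in> {-1<..<1} \<Longrightarrow> isMin s f {v..b} r (Yf r)"
    and Yg: "\<And>r. r \<in> {-1<..<1} \<Longrightarrow> isMin s g {v..b} r (Yg r)"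
    and r: "r \<in> {-1<..<1}" and cont: "isCont (ext Yf v b) r"
  shows "Yg r \<le> Yf r"
proof (rule ccontr)
  assume "\<not> Yg r \<le> Yf r"
  then have lt: "Yf r < Yg r" by simp
  define z where "z = Yg r"
  define y where "y = Yf r"
  have zin: "z \<in> {v..b}" and yin: "y \<in> {v..b}" using Yf[OF r] Yg[OF r] unfolding isMin_def z_def y_def by auto
  have 1: "g z + r * s * z \<le> g y + r * s * y" using Yg[OF r] yin unfolding isMin_def z_def by blast
  have 2: "f y + r * s * y \<le> f w + r * s * w" if "w \<in> {v..b}" for w
    using Yf[OF r] that unfolding isMin_def y_def by blast
  have 3: "g y - f y \<le> g z - f z" using hmon[of y z] zin yin lt unfolding z_def y_def by auto
  have zmin: "isMin s f {v..b} r z"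
    unfolding isMin_def using zin 1 2 3 by fastforce
  have "(ext Yf v b \<longlongrightarrow> ext Yf v b r) (at_left r)"
    using cont by (simp add: isCont_def filterlim_at_split)
  moreover have "ext Yf v b r = y" using r unfolding ext_def y_def by simp
  ultimately have "eventually (\<lambda>r'. ext Yf v b r' < z) (at_left r)"
    using lt order_tendstoD(2) unfolding z_def y_def by metis
  moreover have "eventually (\<lambda>r'. r' \<in> {-1<..<r}) (at_left r)"
    using r by (intro eventually_at_left_real) auto
  ultimately have "eventually (\<lambda>r'. ext Yf v b r' < z \<and> r' \<in> {-1<..<r}) (at_left r)"
    by (rule eventually_conj)
  then obtain r' where r': "ext Yf v b r' < z" "r' \<in> {-1<..<r}"
    by (metis (no_types, lifting) eventually_happens' trivial_limit_at_left_real)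
  have r'i: "r' \<in> {-1<..<1}" using r r' by auto
  have "z \<le> Yf r'" using min_mono[OF s Yf[OF r'i] zmin] r' by auto
  then show False using r' r'i unfolding ext_def by auto
qed

lemma negligible_countable_real:
  fixes S :: "real set"
  assumes "countable S" shows "negligible S"
proof -
  have "negligible (\<Union>((\<lambda>x. {x}) ` S))"
    using assms by (intro negligible_countable_Union) auto
  then show ?thesis by simp
qed

lemma LipOn_sub: "LipOn S L f \<Longrightarrow> T \<subseteq> S \<Longrightarrow> LipOn T L f"
  unfolding LipOn_def by blast

lemma movement:
  assumes ab: "a \<le> b" and s: "s > 0"
    and fL: "LipOn {a..b} s f" and gL: "LipOn {a..b} s g"
    and fC: "convex_on {a..b} f" and gC: "convex_on {a..b} g"
    and fg: "\<And>x. x \<in> {a..b} \<Longrightarrow> f x \<le> g x"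
    and v: "v \<in> {a..b}"
    and hl: "\<And>x1 x2. a \<le> x1 \<Longrightarrow> x1 \<le> x2 \<Longrightarrow> x2 \<le> v \<Longrightarrow> g x2 - f x2 \<le> g x1 - f x1"
    and hr: "\<And>x1 x2. v \<le> x1 \<Longrightarrow> x1 \<le> x2 \<Longrightarrow> x2 \<le> b \<Longrightarrow> g x1 - f x1 \<le> g x2 - f x2"
    and Xf: "\<And>r. r \<in> {-1<..<1} \<Longrightarrow> isMin s f {a..b} r (Xf r)"
    and Xg: "\<And>r. r \<in> {-1<..<1} \<Longrightarrow> isMin s g {a..b} r (Xg r)"
  shows "\<exists>I. ((\<lambda>r. \<bar>Xg r - Xf r\<bar>) has_integral I) {-1..1} \<and> I \<le> (g a - f a + g b - f b) / s"
proof -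
  have av: "a \<le> v" and vb: "v \<le> b" using v by auto
  have fL1: "LipOn {a..v} s f" "LipOn {v..b} s f" using LipOn_sub[OF fL] v by auto
  have gL1: "LipOn {a..v} s g" "LipOn {v..b} s g" using LipOn_sub[OF gL] v by auto
  have mfL: "isMin s f {a..v} r (min (Xf r) v)" "isMin s f {v..b} r (max (Xf r) v)"
    if "r \<in> {-1<..<1}" for r using clamp[OF fC v Xf[OF that]] by auto
  have mgL: "isMin s g {a..v} r (min (Xg r) v)" "isMin s g {v..b} r (max (Xg r) v)"
    if "r \<in> {-1<..<1}" for r using clamp[OF gC v Xg[OF that]] by auto
  have P1: "((\<lambda>r. min (Xg r) v) has_integral ((g a + s * a - g v + s * v) / s)) {-1..1}"
    by (rule piece_integral[OF av s gL1(1)]) (use mgL in auto)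
  have P2: "((\<lambda>r. min (Xf r) v) has_integral ((f a + s * a - f v + s * v) / s)) {-1..1}"
    by (rule piece_integral[OF av s fL1(1)]) (use mfL in auto)
  have P3: "((\<lambda>r. max (Xg r) v) has_integral ((g v + s * v - g b + s * b) / s)) {-1..1}"
    by (rule piece_integral[OF vb s gL1(2)]) (use mgL in auto)
  have P4: "((\<lambda>r. max (Xf r) v) has_integral ((f v + s * v - f b + s * b) / s)) {-1..1}"
    by (rule piece_integral[OF vb s fL1(2)]) (use mfL in auto)
  define I where "I = ((g a + s * a - g v + s * v) / s - (f a + s * a - f v + s * v) / s)
      + ((f v + s * v - f b + s * b) / s - (g v + s * v - g b + s * b) / s)"
  have comb: "((\<lambda>r. (min (Xg r) v - min (Xf r) v) + (max (Xf r) v - max (Xg r) v)) has_integral I) {-1..1}"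
    unfolding I_def by (intro has_integral_add has_integral_diff P1 P2 P3 P4)
  define S where "S = {r. \<not> isCont (ext (\<lambda>r. min (Xf r) v) a v) r}
      \<union> {r. \<not> isCont (ext (\<lambda>r. max (Xf r) v) v b) r} \<union> {-1, 1}"
  have "countable S" unfolding S_def
    using ext_countable[OF s av, of f "\<lambda>r. min (Xf r) v"] ext_countable[OF s vb, of f "\<lambda>r. max (Xf r) v"] mfL
    by auto
  then have negS: "negligible S" by (rule negligible_countable_real)
  have "((\<lambda>r. \<bar>Xg r - Xf r\<bar>) has_integral I) {-1..1}"
  proof (rule has_integral_spike[OF negS _ comb])
    fix r assume r: "r \<in> {-1..1} - S"
    then have ri: "r \<in> {-1<..<1}" unfolding S_def by auto
    have c1: "isCont (ext (\<lambda>r. min (Xf r) v) a v) r" and c2: "isCont (ext (\<lambda>r. max (Xf r) v) v b) r"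
      using r unfolding S_def by auto
    have o1: "min (Xf r) v \<le> min (Xg r) v"
      by (rule order_left[where f=f and g=g and Yf="\<lambda>r. min (Xf r) v" and Yg="\<lambda>r. min (Xg r) v", OF s hl _ _ ri c1])
         (use mfL mgL in auto)
    have o2: "max (Xg r) v \<le> max (Xf r) v"
      by (rule order_right[where f=f and g=g and Yf="\<lambda>r. max (Xf r) v" and Yg="\<lambda>r. max (Xg r) v", OF s hr _ _ ri c2])
         (use mfL mgL in auto)
    show "\<bar>Xg r - Xf r\<bar> = (min (Xg r) v - min (Xf r) v) + (max (Xf r) v - max (Xg r) v)"
      using o1 o2 by (auto simp: min_def max_def abs_if split: if_splits)
  qed
  moreover have "I \<le> (g a - f a + g b - f b) / s"
  proof -
    have "I = (g a - f a + g b - f b - 2 * (g v - f v)) / s" unfolding I_def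
      using s by (simp add: field_simps)
    also have "\<dots> \<le> (g a - f a + g b - f b) / s"
      using fg[OF v] s by (intro divide_right_mono) auto
    finally show ?thesis .
  qed
  ultimately show ?thesis by blast
qed



lemma norm_real_eq: assumes "is_norm_real nrm" shows "nrm z = \<bar>z\<bar> * nrm 1" "nrm 1 > 0"
proof -
  have "nrm (z * 1) = \<bar>z\<bar> * nrm 1" using assms unfolding is_norm_real_def by blast
  then show "nrm z = \<bar>z\<bar> * nrm 1" by simp
  have "nrm 1 \<ge> 0" "nrm 1 \<noteq> 0" using assms unfolding is_norm_real_def by auto
  then show "nrm 1 > 0" by simp
qed

lemma soco_Lip:
  assumes "soco_costs a b G B c"
  shows "LipOn {a..b} G (c t)" "convex_on {a..b} (c t)" "\<And>z. z \<in> {a..b} \<Longrightarrow> 0 \<le> c t z"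
    "\<And>z. z \<in> {a..b} \<Longrightarrow> c t z \<le> B"
proof -
  have sg: "\<forall>x\<in>{a..b}. \<exists>g. \<bar>g\<bar> \<le> G \<and> is_subgradient {a..b} (c t) x g"
    using assms unfolding soco_costs_def by blast
  show "LipOn {a..b} G (c t)" unfolding LipOn_def
  proof (intro ballI)
    have *: "c t x - c t y \<le> G * \<bar>x - y\<bar>" if xy: "x \<in> {a..b}" "y \<in> {a..b}" for x y
    proof -
      obtain g where g1: "\<bar>g\<bar> \<le> G" and g2: "is_subgradient {a..b} (c t) x g"
        using bspec[OF sg xy(1)] by blast
      have "c t x + g * (y - x) \<le> c t y" using g2 xy(2) unfolding is_subgradient_def by blast
      then have "c t x - c t y \<le> - g * (y - x)" by (simp add: algebra_simps)
      also have "\<dots> = g * (x - y)" by (simp add: algebra_simps)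
      also have "\<dots> \<le> \<bar>g * (x - y)\<bar>" by (rule abs_ge_self)
      also have "\<dots> = \<bar>g\<bar> * \<bar>x - y\<bar>" by (rule abs_mult)
      also have "\<dots> \<le> G * \<bar>x - y\<bar>" using g1 by (intro mult_right_mono) auto
      finally show ?thesis .
    qed
    fix x y assume "x \<in> {a..b}" "y \<in> {a..b}"
    moreover have "\<bar>y - x\<bar> = \<bar>x - y\<bar>" by (rule abs_minus_commute)
    ultimately show "\<bar>c t x - c t y\<bar> \<le> G * \<bar>x - y\<bar>" using *[of x y] *[of y x] by (simp add: abs_le_iff)
  qed
  show "convex_on {a..b} (c t)" using assms unfolding soco_costs_def by blast
  have "\<forall>x\<in>{a..b}. 0 \<le> c t x \<and> c t x \<le> B" using assms unfolding soco_costs_def by blast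
  then show "\<And>z. z \<in> {a..b} \<Longrightarrow> 0 \<le> c t z" "\<And>z. z \<in> {a..b} \<Longrightarrow> c t z \<le> B"
    by auto
qed

locale setting =
  fixes a b G B \<theta> :: real and nrm :: "real \<Rightarrow> real" and c :: "nat \<Rightarrow> real \<Rightarrow> real"
    and x :: "real \<Rightarrow> nat \<Rightarrow> real"
  assumes a0: "0 \<le> a" and ab: "a \<le> b" and norm: "is_norm_real nrm" and th: "\<theta> \<ge> 1"
    and costs: "soco_costs a b G B c" and run: "rbg_run (\<lambda>z. \<theta> * nrm z) {a..b} c x"
begin

definition "n = nrm 1"
definition "s = \<theta> * n"
abbreviation "W \<equiv> rbg_work (\<lambda>z. \<theta> * nrm z) {a..b} c"

lemma n_pos: "n > 0" unfolding n_def by (rule norm_real_eq(2)[OF norm])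
lemma s_pos: "s > 0" unfolding s_def using n_pos th by simp
lemma nrm_eq: "nrm z = \<bar>z\<bar> * n" unfolding n_def by (rule norm_real_eq(1)[OF norm])

lemma N_eq: "\<theta> * nrm u = s * \<bar>u\<bar>" unfolding s_def by (subst nrm_eq) simp

lemma W0: "W 0 z = s * \<bar>z\<bar>" by (simp only: rbg_work.simps N_eq)

lemma W_Suc: "W (Suc t) z = Inf ((\<lambda>y. W t y + c (Suc t) y + s * \<bar>z - y\<bar>) ` {a..b})"
  by (simp only: rbg_work.simps N_eq)

lemma W_props: "LipOn {a..b} s (W t) \<and> convex_on {a..b} (W t)"
proof (induction t)
  case 0
  have "LipOn {a..b} s (W 0)" unfolding LipOn_def W0
  proof (intro ballI)
    fix u w :: real
    have "\<bar>s * \<bar>u\<bar> - s * \<bar>w\<bar>\<bar> = s * \<bar>\<bar>u\<bar> - \<bar>w\<bar>\<bar>"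
    proof -
      have "s * \<bar>u\<bar> - s * \<bar>w\<bar> = s * (\<bar>u\<bar> - \<bar>w\<bar>)" by (simp add: right_diff_distrib)
      then show ?thesis using s_pos by (simp add: abs_mult)
    qed
    also have "\<dots> \<le> s * \<bar>u - w\<bar>" using s_pos by (intro mult_left_mono) auto
    finally show "\<bar>s * \<bar>u\<bar> - s * \<bar>w\<bar>\<bar> \<le> s * \<bar>u - w\<bar>" .
  qed
  moreover have "convex_on {a..b} (W 0)"
  proof (rule convex_onI)
    fix t u w :: real assume t: "0 < t" "t < 1"
    have "\<bar>(1 - t) * u + t * w\<bar> \<le> \<bar>(1 - t) * u\<bar> + \<bar>t * w\<bar>" by (rule abs_triangle_ineq)
    also have "\<dots> = (1 - t) * \<bar>u\<bar> + t * \<bar>w\<bar>" using t by (simp add: abs_mult)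
    finally have "s * \<bar>(1 - t) * u + t * w\<bar> \<le> s * ((1 - t) * \<bar>u\<bar> + t * \<bar>w\<bar>)"
      using s_pos by (intro mult_left_mono) auto
    then show "W 0 ((1 - t) *\<^sub>R u + t *\<^sub>R w) \<le> (1 - t) * W 0 u + t * W 0 w"
      unfolding W0 by (simp add: algebra_simps)
  qed simp
  ultimately show ?case by simp
next
  case (Suc t)
  have cs: "LipOn {a..b} G (c (Suc t))" "convex_on {a..b} (c (Suc t))" "\<And>z. z \<in> {a..b} \<Longrightarrow> 0 \<le> c (Suc t) z"
    using soco_Lip[OF costs] by auto
  interpret ws: wstep a b s G "W t" "c (Suc t)"
    by (rule wstep.intro) (use Suc ab s_pos cs in auto)
  have "W (Suc t) = ws.g" unfolding ws.g_def[abs_def] by (rule ext) (rule W_Suc)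
  then show ?case using ws.g_Lip ws.g_convex by simp
qed

lemma ws_interp: "wstep a b s G (W t) (c (Suc t))"
proof -
  have cs: "LipOn {a..b} G (c (Suc t))" "convex_on {a..b} (c (Suc t))" "\<And>z. z \<in> {a..b} \<Longrightarrow> 0 \<le> c (Suc t) z"
    using soco_Lip[OF costs] by auto
  show ?thesis by (rule wstep.intro) (use W_props ab s_pos cs in auto)
qed

lemma W_Suc_g: "W (Suc t) = wstep.g a b s (W t) (c (Suc t))"
  by (rule ext) (simp only: W_Suc wstep.g_def[OF ws_interp])

lemma X_min:
  assumes k: "k \<ge> 1" and r: "r \<in> {-1<..<1}"
  shows "isMin s (W (k - 1)) {a..b} r (x r k)"
proof -
  have h: "x r k \<in> {a..b} \<and> (\<forall>z\<in>{a..b}. W (k - 1) (x r k) + r * (\<theta> * nrm (x r k))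
               \<le> W (k - 1) z + r * (\<theta> * nrm z))"
    using run r k unfolding rbg_run_def by blast
  have ab0: "z \<in> {a..b} \<Longrightarrow> \<bar>z\<bar> = z" for z using a0 by auto
  show ?thesis unfolding isMin_def
  proof (intro conjI ballI)
    show "x r k \<in> {a..b}" using h by blast
    fix w assume w: "w \<in> {a..b}"
    have "W (k - 1) (x r k) + r * (s * \<bar>x r k\<bar>) \<le> W (k - 1) w + r * (s * \<bar>w\<bar>)"
      using h w by (simp only: N_eq)
    then show "W (k - 1) (x r k) + r * s * x r k \<le> W (k - 1) w + r * s * w"
      using ab0[OF w] ab0[of "x r k"] h by (simp add: mult.assoc)
  qed
qed

lemma x_in: "k \<ge> 1 \<Longrightarrow> r \<in> {-1<..<1} \<Longrightarrow> x r k \<in> {a..b}"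
  using X_min unfolding isMin_def by blast

definition m :: "nat \<Rightarrow> real \<Rightarrow> real" where
  "m k r = W k (x r (Suc k)) + r * s * x r (Suc k)"

lemma hit_step:
  assumes r: "r \<in> {-1<..<1}"
  shows "c (Suc t) (x r (Suc (Suc t))) \<le> m (Suc t) r - m t r"
proof -
  interpret ws: wstep a b s G "W t" "c (Suc t)" by (rule ws_interp)
  have mg: "isMin s ws.g {a..b} r (x r (Suc (Suc t)))"
    using X_min[of "Suc (Suc t)" r] r W_Suc_g by simp
  have mf: "isMin s (W t) {a..b} r (x r (Suc t))"
    using X_min[of "Suc t" r] r by simp
  have rr: "\<bar>r\<bar> < 1" using r by auto
  have "ws.g (x r (Suc (Suc t))) = W t (x r (Suc (Suc t))) + c (Suc t) (x r (Suc (Suc t)))"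
    by (rule ws.g_contact[OF _ rr]) (use mg in \<open>auto simp: isMin_def\<close>)
  moreover have "W t (x r (Suc t)) + r * s * x r (Suc t) \<le> W t (x r (Suc (Suc t))) + r * s * x r (Suc (Suc t))"
    using mf mg unfolding isMin_def by blast
  ultimately show ?thesis unfolding m_def W_Suc_g by simp
qed

lemma hit_sum:
  assumes r: "r \<in> {-1<..<1}"
  shows "(\<Sum>t=1..T. c t (x r (t + 1))) \<le> m T r - m 0 r"
proof (induction T)
  case 0 then show ?case by simp
next
  case (Suc T)
  have "(\<Sum>t=1..Suc T. c t (x r (t + 1))) = (\<Sum>t=1..T. c t (x r (t + 1))) + c (Suc T) (x r (Suc (Suc T)))"
    by (simp add: sum.cl_ivl_Suc)
  then show ?case using Suc hit_step[OF r, of T] by simp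
qed

lemma m0_nonneg: assumes r: "r \<in> {-1<..<1}" shows "m 0 r \<ge> 0"
proof -
  have "x r 1 \<ge> 0" using x_in[of 1 r] r a0 by auto
  then have "s * x r 1 * (1 + r) \<ge> 0" using s_pos r by simp
  then show ?thesis unfolding m_def W0 using \<open>x r 1 \<ge> 0\<close> by (simp add: algebra_simps)
qed

lemma mT_le: assumes r: "r \<in> {-1<..<1}" shows "m T r \<le> W T a + s * b"
proof -
  have "m T r \<le> W T a + r * s * a"
    using X_min[of "Suc T" r] r ab unfolding m_def isMin_def by auto
  moreover have "r * s * a \<le> s * b"
  proof -
    have "r * s * a \<le> \<bar>r\<bar> * s * a" using s_pos a0 by (intro mult_right_mono) auto
    also have "\<dots> \<le> 1 * s * b" using r s_pos a0 ab by (intro mult_mono) auto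
    finally show ?thesis by simp
  qed
  ultimately show ?thesis by simp
qed

definition P :: "nat \<Rightarrow> (nat \<Rightarrow> real) \<Rightarrow> real" where
  "P T y = (\<Sum>t=1..T. c t (y t) + s * \<bar>y t - y (t - 1)\<bar>)"

lemma path_bound:
  assumes y0: "y 0 = 0" and yin: "\<forall>t\<in>{1..T}. y t \<in> {a..b}"
  shows "W T z \<le> P T y + s * \<bar>z - y T\<bar>"
  using yin
proof (induction T arbitrary: z)
  case 0 then show ?case by (simp add: P_def y0 N_eq)
next
  case (Suc T)
  interpret ws: wstep a b s G "W T" "c (Suc T)" by (rule ws_interp)
  have yS: "y (Suc T) \<in> {a..b}" using Suc.prems by auto
  have IH: "W T (y (Suc T)) \<le> P T y + s * \<bar>y (Suc T) - y T\<bar>" using Suc by auto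
  have "W (Suc T) z \<le> W T (y (Suc T)) + c (Suc T) (y (Suc T)) + s * \<bar>z - y (Suc T)\<bar>"
    unfolding W_Suc_g by (rule ws.g_le[OF yS])
  also have "P (Suc T) y = P T y + (c (Suc T) (y (Suc T)) + s * \<bar>y (Suc T) - y T\<bar>)"
    unfolding P_def by (simp add: sum.cl_ivl_Suc)
  ultimately show ?case using IH by simp
qed

lemma W_nonneg_mono: "z \<in> {a..b} \<Longrightarrow> W t z \<le> W (Suc t) z"
proof -
  assume z: "z \<in> {a..b}"
  interpret ws: wstep a b s G "W t" "c (Suc t)" by (rule ws_interp)
  show ?thesis unfolding W_Suc_g by (rule ws.g_ge_f[OF z])
qed

lemma mov_step:
  "\<exists>I. ((\<lambda>r. \<bar>x r (Suc (Suc t)) - x r (Suc t)\<bar>) has_integral I) {-1..1} \<and>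
       I \<le> (W (Suc t) a - W t a + W (Suc t) b - W t b) / s"
proof -
  interpret ws: wstep a b s G "W t" "c (Suc t)" by (rule ws_interp)
  obtain v where v: "v \<in> {a..b}"
    "\<And>x1 x2. a \<le> x1 \<Longrightarrow> x1 \<le> x2 \<Longrightarrow> x2 \<le> v \<Longrightarrow> ws.g x2 - W t x2 \<le> ws.g x1 - W t x1"
    "\<And>x1 x2. v \<le> x1 \<Longrightarrow> x1 \<le> x2 \<Longrightarrow> x2 \<le> b \<Longrightarrow> ws.g x1 - W t x1 \<le> ws.g x2 - W t x2"
    using ws.valley by blast
  have "\<exists>I. ((\<lambda>r. \<bar>x r (Suc (Suc t)) - x r (Suc t)\<bar>) has_integral I) {-1..1} \<and>
       I \<le> (ws.g a - W t a + ws.g b - W t b) / s"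
  proof (rule movement[OF ab s_pos _ ws.g_Lip _ ws.g_convex _ v(1) v(2) v(3)])
    show "LipOn {a..b} s (W t)" "convex_on {a..b} (W t)" using W_props by auto
    show "\<And>z. z \<in> {a..b} \<Longrightarrow> W t z \<le> ws.g z" by (rule ws.g_ge_f)
    show "\<And>r. r \<in> {-1<..<1} \<Longrightarrow> isMin s (W t) {a..b} r (x r (Suc t))"
      using X_min[of "Suc t"] by simp
    show "\<And>r. r \<in> {-1<..<1} \<Longrightarrow> isMin s ws.g {a..b} r (x r (Suc (Suc t)))"
      using X_min[of "Suc (Suc t)"] W_Suc_g by simp
  qed
  then show ?thesis unfolding W_Suc_g by simp
qed

end


lemma unif_eq: "uniform_measure lborel {-1<..<(1::real)} = density lborel (\<lambda>x. ennreal (indicator {-1<..<1} x / 2))"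
proof -
  have e: "emeasure lborel {-1<..<(1::real)} = ennreal 2" by simp
  have "(\<lambda>x. indicator {-1<..<(1::real)} x / ennreal 2) = (\<lambda>x. ennreal (indicator {-1<..<1} x / 2))"
  proof (rule ext)
    fix x
    have "(1::ennreal) / ennreal 2 = ennreal (1 / 2)" using divide_ennreal[of 1 2] by simp
    then show "indicator {-1<..<(1::real)} x / ennreal 2 = ennreal (indicator {-1<..<1} x / 2)"
      by (auto simp: indicator_def)
  qed
  then show ?thesis unfolding uniform_measure_def e by simp
qed

lemma bridge:
  fixes f :: "real \<Rightarrow> real"
  assumes f[measurable]: "f \<in> borel_measurable borel" and bd: "\<And>r. r \<in> {-1<..<1} \<Longrightarrow> \<bar>f r\<bar> \<le> C"
  shows "integrable (uniform_measure lborel {-1<..<1}) f" "expect_r f = integral {-1..1} f / 2"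
proof -
  define A :: "real set" where "A = {-1<..<1}"
  have Am[measurable]: "A \<in> sets borel" unfolding A_def by simp
  have i1: "integrable lborel (\<lambda>x. \<bar>C\<bar> * indicator A x :: real)"
    unfolding A_def by (intro integrable_mult_right integrable_real_indicator) auto
  have m1: "(\<lambda>x. indicator A x *\<^sub>R f x) \<in> borel_measurable lborel" by measurable
  have ae1: "AE x in lborel. norm (indicator A x *\<^sub>R f x) \<le> norm (\<bar>C\<bar> * indicator A x :: real)"
    using bd unfolding A_def by (intro AE_I2) (force simp: indicator_def)
  have si: "integrable lborel (\<lambda>x. indicator A x *\<^sub>R f x)"
    by (rule Bochner_Integration.integrable_bound[OF i1 m1 ae1])
  have g[measurable]: "(\<lambda>x. indicator A x / 2 :: real) \<in> borel_measurable lborel" by measurable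
  have int2: "integrable lborel (\<lambda>x. (indicator A x / 2) *\<^sub>R f x)"
    using integrable_mult_left[OF si, of "1/2"] by (simp add: algebra_simps)
  show "integrable (uniform_measure lborel {-1<..<1}) f"
    unfolding unif_eq unfolding A_def[symmetric]
    by (subst integrable_density) (use int2 in auto)
  have "expect_r f = integral\<^sup>L lborel (\<lambda>x. (indicator A x / 2) *\<^sub>R f x)"
    unfolding expect_r_def unif_eq unfolding A_def[symmetric]
    by (rule integral_density) auto
  also have "\<dots> = (LINT x:A|lborel. f x) / 2"
    unfolding set_lebesgue_integral_def by (simp add: algebra_simps)
  also have "(LINT x:A|lborel. f x) = integral A f"
    by (rule set_borel_integral_eq_integral) (use si in \<open>simp add: set_integrable_def\<close>)
  also have "integral A f = integral {-1..1} f"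
    unfolding A_def by (simp add: integral_open_interval_real)
  finally show "expect_r f = integral {-1..1} f / 2" .
qed



lemma int_cmul: "(f :: real \<Rightarrow> real) integrable_on S \<Longrightarrow> (\<lambda>x. c * f x) integrable_on S"
  using integrable_cmul[of f S c] by simp

lemma ae_A: "(\<And>r. r \<in> {-1<..<1} \<Longrightarrow> P r) \<Longrightarrow> AE r in uniform_measure lborel {-1<..<(1::real)}. P r"
  by (intro AE_uniform_measureI AE_I2) auto

lemma expect_mono:
  assumes "integrable (uniform_measure lborel {-1<..<(1::real)}) f" "integrable (uniform_measure lborel {-1<..<1}) g"
    and "\<And>r. r \<in> {-1<..<1} \<Longrightarrow> f r \<le> g r"
  shows "expect_r f \<le> expect_r g"
  unfolding expect_r_def by (rule integral_mono_AE[OF assms(1,2) ae_A]) (use assms(3) in auto)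

lemma expect_const: "integrable (uniform_measure lborel {-1<..<(1::real)}) (\<lambda>_. K)" "expect_r (\<lambda>_. K) = K"
  using bridge[of "\<lambda>_. K" "\<bar>K\<bar>"] by auto

context setting
begin

lemma mov_total:
  "(\<forall>t\<in>{1..T}. (\<lambda>r. \<bar>x r (t + 1) - x r t\<bar>) integrable_on {-1..1}) \<and>
   (\<Sum>t=1..T. integral {-1..1} (\<lambda>r. \<bar>x r (t + 1) - x r t\<bar>)) \<le> (W T a - W 0 a + W T b - W 0 b) / s"
proof (induction T)
  case 0 then show ?case by simp
next
  case (Suc T)
  obtain I where I: "((\<lambda>r. \<bar>x r (Suc (Suc T)) - x r (Suc T)\<bar>) has_integral I) {-1..1}"
      "I \<le> (W (Suc T) a - W T a + W (Suc T) b - W T b) / s"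
    using mov_step[of T] by blast
  have int: "(\<lambda>r. \<bar>x r (Suc T + 1) - x r (Suc T)\<bar>) integrable_on {-1..1}"
    "integral {-1..1} (\<lambda>r. \<bar>x r (Suc T + 1) - x r (Suc T)\<bar>) = I"
    using I(1) by (auto simp: has_integral_integrable_integral)
  have "(\<Sum>t=1..Suc T. integral {-1..1} (\<lambda>r. \<bar>x r (t + 1) - x r t\<bar>))
      = (\<Sum>t=1..T. integral {-1..1} (\<lambda>r. \<bar>x r (t + 1) - x r t\<bar>)) + I"
    using int(2) by (simp add: sum.cl_ivl_Suc)
  also have "\<dots> \<le> (W T a - W 0 a + W T b - W 0 b) / s + (W (Suc T) a - W T a + W (Suc T) b - W T b) / s"
    using Suc.IH I(2) by linarith
  also have "\<dots> = (W (Suc T) a - W 0 a + W (Suc T) b - W 0 b) / s"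
    by (simp add: add_divide_distrib[symmetric])
  finally show ?case using Suc.IH int(1) by (auto simp: le_Suc_eq)
qed


lemma mov_expect:
  assumes meas[measurable]: "\<And>t. (\<lambda>r. x r t) \<in> borel_measurable borel"
  shows "integrable (uniform_measure lborel {-1<..<1}) (\<lambda>r. n * b + (\<Sum>t=1..T. n * \<bar>x r (t + 1) - x r t\<bar>))"
    "expect_r (\<lambda>r. n * b + (\<Sum>t=1..T. n * \<bar>x r (t + 1) - x r t\<bar>)) \<le> n * b + n * (W T a + W T b) / (2 * s)"
proof -
  define F where "F r = n * b + (\<Sum>t=1..T. n * \<bar>x r (t + 1) - x r t\<bar>)" for r
  have Fm: "F \<in> borel_measurable borel" unfolding F_def by measurable
  have Fb: "\<bar>F r\<bar> \<le> n * b + (\<Sum>t=1..T. n * b)" if r: "r \<in> {-1<..<1}" for r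
  proof -
    have "\<bar>x r (t + 1) - x r t\<bar> \<le> b" if "t \<in> {1..T}" for t
      using x_in[of t r] x_in[of "t + 1" r] r that a0 by auto
    then have "(\<Sum>t=1..T. n * \<bar>x r (t + 1) - x r t\<bar>) \<le> (\<Sum>t=1..T. n * b)"
      using n_pos by (intro sum_mono mult_left_mono) auto
    moreover have "0 \<le> (\<Sum>t=1..T. n * \<bar>x r (t + 1) - x r t\<bar>)" using n_pos by (intro sum_nonneg) auto
    moreover have "0 \<le> n * b" using n_pos a0 ab by simp
    ultimately show ?thesis unfolding F_def by (simp only: abs_of_nonneg add_nonneg_nonneg add_left_mono)
  qed
  show "integrable (uniform_measure lborel {-1<..<1}) (\<lambda>r. n * b + (\<Sum>t=1..T. n * \<bar>x r (t + 1) - x r t\<bar>))"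
    using bridge(1)[OF Fm Fb] unfolding F_def by simp
  have e: "expect_r F = integral {-1..1} F / 2" by (rule bridge(2)[OF Fm Fb])
  have MT: "\<forall>t\<in>{1..T}. (\<lambda>r. \<bar>x r (t + 1) - x r t\<bar>) integrable_on {-1..1}"
    "(\<Sum>t=1..T. integral {-1..1} (\<lambda>r. \<bar>x r (t + 1) - x r t\<bar>)) \<le> (W T a - W 0 a + W T b - W 0 b) / s"
    using mov_total[of T] by auto
  have i1t: "(\<lambda>r. n * \<bar>x r (t + 1) - x r t\<bar>) integrable_on {-1..1}" if "t \<in> {1..T}" for t
    using int_cmul[of "\<lambda>r. \<bar>x r (t + 1) - x r t\<bar>" "{-1..1}" n] MT(1) that by blast
  have i2: "(\<lambda>r. \<Sum>t=1..T. n * \<bar>x r (t + 1) - x r t\<bar>) integrable_on {-1..1}"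
    by (rule Henstock_Kurzweil_Integration.integrable_sum[where f="\<lambda>t r. n * \<bar>x r (t + 1) - x r t\<bar>", OF finite_atLeastAtMost i1t])
  have ic: "(\<lambda>_::real. n * b) integrable_on {-1..(1::real)}" by (rule integrable_const_ivl)
  have e1: "integral {-1..1} F = integral {-1..(1::real)} (\<lambda>_::real. n * b) + integral {-1..1} (\<lambda>r. \<Sum>t=1..T. n * \<bar>x r (t + 1) - x r t\<bar>)"
    unfolding F_def[abs_def] by (rule Henstock_Kurzweil_Integration.integral_add[OF ic i2])
  have e2: "integral {-1..(1::real)} (\<lambda>_::real. n * b) = 2 * (n * b)" by simp
  have e3: "integral {-1..1} (\<lambda>r. \<Sum>t=1..T. n * \<bar>x r (t + 1) - x r t\<bar>)
      = (\<Sum>t=1..T. integral {-1..1} (\<lambda>r. n * \<bar>x r (t + 1) - x r t\<bar>))"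
    by (rule Henstock_Kurzweil_Integration.integral_sum[where f="\<lambda>t r. n * \<bar>x r (t + 1) - x r t\<bar>", OF finite_atLeastAtMost i1t])
  have e4: "(\<Sum>t=1..T. integral {-1..1} (\<lambda>r. n * \<bar>x r (t + 1) - x r t\<bar>))
     = (\<Sum>t=1..T. n * integral {-1..1} (\<lambda>r. \<bar>x r (t + 1) - x r t\<bar>))"
    by (rule sum.cong[OF refl]) (rule integral_mult[symmetric], use MT(1) in auto)
  have e5: "(\<Sum>t=1..T. n * integral {-1..1} (\<lambda>r. \<bar>x r (t + 1) - x r t\<bar>))
     = n * (\<Sum>t=1..T. integral {-1..1} (\<lambda>r. \<bar>x r (t + 1) - x r t\<bar>))"
    by (rule sum_distrib_left[symmetric])
  have e6: "n * (\<Sum>t=1..T. integral {-1..1} (\<lambda>r. \<bar>x r (t + 1) - x r t\<bar>)) \<le> n * ((W T a - W 0 a + W T b - W 0 b) / s)"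
    using MT(2) n_pos by (intro mult_left_mono) auto
  have w0: "W 0 a \<ge> 0" "W 0 b \<ge> 0" using W0[of a] W0[of b] s_pos by auto
  have e7: "n * ((W T a - W 0 a + W T b - W 0 b) / s) \<le> n * ((W T a + W T b) / s)"
    using w0 n_pos s_pos by (intro mult_left_mono divide_right_mono) auto
  have iF: "integral {-1..1} F \<le> 2 * (n * b) + n * ((W T a + W T b) / s)"
    using e1 e2 e3 e4 e5 e6 e7 by linarith
  have "expect_r F \<le> (2 * (n * b) + n * ((W T a + W T b) / s)) / 2"
    unfolding e by (rule divide_right_mono[OF iF]) simp
  moreover have "(2 * (n * b) + n * ((W T a + W T b) / s)) / 2 = n * b + n * (W T a + W T b) / (2 * s)"
    using s_pos by (simp add: field_simps)
  ultimately have "expect_r F \<le> n * b + n * (W T a + W T b) / (2 * s)" by simp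
  moreover have "(\<lambda>r. n * b + (\<Sum>t=1..T. n * \<bar>x r (t + 1) - x r t\<bar>)) = F" by (rule ext) (simp only: F_def)
  ultimately show "expect_r (\<lambda>r. n * b + (\<Sum>t=1..T. n * \<bar>x r (t + 1) - x r t\<bar>)) \<le> n * b + n * (W T a + W T b) / (2 * s)"
    by simp
qed

end

lemma term_ineq:
  fixes q \<alpha> cc d nn :: real
  assumes "q \<ge> 1" "\<alpha> \<ge> 1" "cc \<ge> 0" "d \<ge> 0" "nn > 0"
  shows "(1 + 1 / q) * (cc + q * nn * d) \<le> (1 + q) / min q \<alpha> * (cc + \<alpha> * (d * nn))"
proof (cases "q \<le> \<alpha>")
  case True
  then have m: "min q \<alpha> = q" by simp
  have "(1 + 1 / q) * (cc + q * nn * d) = (1 + q) / q * (cc + q * (d * nn))"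
    using assms by (simp add: field_simps)
  also have "\<dots> \<le> (1 + q) / q * (cc + \<alpha> * (d * nn))"
    using assms True by (intro mult_left_mono add_left_mono mult_right_mono) auto
  finally show ?thesis unfolding m .
next
  case False
  then have m: "min q \<alpha> = \<alpha>" by simp
  have "(1 + 1 / q) * (cc + q * nn * d) = (1 + q) / q * cc + (1 + q) * (d * nn)"
    using assms by (simp add: field_simps)
  also have "(1 + q) / q * cc \<le> (1 + q) / \<alpha> * cc"
    using assms False by (intro mult_right_mono divide_left_mono) auto
  also have "(1 + q) * (d * nn) = (1 + q) / \<alpha> * (\<alpha> * (d * nn))" using assms by simp
  finally show ?thesis unfolding m by (simp add: distrib_left)
qed

context setting
begin

lemma absb: "T = 0 \<or> y T \<in> {a..b} \<Longrightarrow> y 0 = 0 \<Longrightarrow> \<bar>a - y T\<bar> \<le> b \<and> \<bar>b - y T\<bar> \<le> b"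
  using a0 ab by (cases "T = 0") auto

lemma Pt_bound:
  assumes \<alpha>: "\<alpha> \<ge> 1" and yin: "\<forall>t\<in>{1..T}. y t \<in> {a..b}"
  shows "(1 + 1 / \<theta>) * P T y \<le> (1 + \<theta>) / min \<theta> \<alpha> * (\<Sum>t=1..T. c t (y t) + \<alpha> * nrm (y t - y (t - 1)))"
proof -
  have "(1 + 1 / \<theta>) * P T y = (\<Sum>t=1..T. (1 + 1 / \<theta>) * (c t (y t) + \<theta> * n * \<bar>y t - y (t - 1)\<bar>))"
    unfolding P_def s_def by (simp add: sum_distrib_left)
  also have "\<dots> \<le> (\<Sum>t=1..T. (1 + \<theta>) / min \<theta> \<alpha> * (c t (y t) + \<alpha> * (\<bar>y t - y (t - 1)\<bar> * n)))"
  proof (rule sum_mono)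
    fix t assume t: "t \<in> {1..T}"
    have "c t (y t) \<ge> 0" using soco_Lip(3)[OF costs] yin t by blast
    then show "(1 + 1 / \<theta>) * (c t (y t) + \<theta> * n * \<bar>y t - y (t - 1)\<bar>)
        \<le> (1 + \<theta>) / min \<theta> \<alpha> * (c t (y t) + \<alpha> * (\<bar>y t - y (t - 1)\<bar> * n))"
      using term_ineq[OF th \<alpha> _ _ n_pos] by simp
  qed
  also have "\<dots> = (1 + \<theta>) / min \<theta> \<alpha> * (\<Sum>t=1..T. c t (y t) + \<alpha> * (\<bar>y t - y (t - 1)\<bar> * n))"
    by (simp add: sum_distrib_left)
  also have "(\<Sum>t=1..T. c t (y t) + \<alpha> * (\<bar>y t - y (t - 1)\<bar> * n)) = (\<Sum>t=1..T. c t (y t) + \<alpha> * nrm (y t - y (t - 1)))"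
    by (simp only: nrm_eq)
  finally show ?thesis .
qed

lemma Pa_nonneg:
  assumes \<alpha>: "\<alpha> \<ge> 1" and yin: "\<forall>t\<in>{1..T}. y t \<in> {a..b}"
  shows "0 \<le> (\<Sum>t=1..T. c t (y t) + \<alpha> * nrm (y t - y (t - 1)))"
proof (rule sum_nonneg)
  fix t assume t: "t \<in> {1..T}"
  have "c t (y t) \<ge> 0" using soco_Lip(3)[OF costs] yin t by blast
  moreover have "nrm (y t - y (t - 1)) \<ge> 0" using norm unfolding is_norm_real_def by blast
  ultimately show "0 \<le> c t (y t) + \<alpha> * nrm (y t - y (t - 1))" using \<alpha> by simp
qed

lemma Mv_meas:
  assumes meas[measurable]: "\<And>t. (\<lambda>r. x r t) \<in> borel_measurable borel"
  shows "(\<lambda>r. \<Sum>t=1..T. \<bar>x r (t + 1) - (if t = 1 then 0 else x r t)\<bar> * n) \<in> borel_measurable borel"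
proof -
  have "(\<lambda>r. \<bar>x r (t + 1) - (if t = 1 then 0 else x r t)\<bar> * n) \<in> borel_measurable borel" for t
    by (cases "t = 1") simp_all
  then show ?thesis by (intro borel_measurable_sum) auto
qed

lemma part1:
  assumes meas[measurable]: "\<And>t. (\<lambda>r. x r t) \<in> borel_measurable borel" and \<alpha>: "\<alpha> \<ge> 1"
    and y0: "y 0 = 0" and yin: "\<forall>t\<in>{1..T}. y t \<in> {a..b}"
  shows "cost_la 1 1 nrm c T x \<le> (1 + \<theta>) / min \<theta> \<alpha> * (\<Sum>t=1..T. c t (y t) + \<alpha> * nrm (y t - y (t - 1)))
            + (2 * s * b + 2 * n * b)"
proof -
  define Hs where "Hs r = (\<Sum>t=1..T. c t (x r (t + 1)))" for r
  define Mv where "Mv r = (\<Sum>t=1..T. \<bar>x r (t + 1) - (if t = 1 then 0 else x r t)\<bar> * n)" for r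
  define Mv' where "Mv' r = n * b + (\<Sum>t=1..T. n * \<bar>x r (t + 1) - x r t\<bar>)" for r
  define Pt where "Pt = P T y"
  define Pa where "Pa = (\<Sum>t=1..T. c t (y t) + \<alpha> * nrm (y t - y (t - 1)))"
  define \<rho> where "\<rho> = (1 + \<theta>) / min \<theta> \<alpha>"
  have \<rho>0: "\<rho> \<ge> 0" unfolding \<rho>_def using th \<alpha> by simp
  have Pa0: "Pa \<ge> 0" unfolding Pa_def by (rule Pa_nonneg[OF \<alpha> yin])
  have PtPa: "(1 + 1 / \<theta>) * Pt \<le> \<rho> * Pa" unfolding Pt_def \<rho>_def Pa_def by (rule Pt_bound[OF \<alpha> yin])
  have yT: "T = 0 \<or> y T \<in> {a..b}" using yin by auto
  have ay: "\<bar>a - y T\<bar> \<le> b" "\<bar>b - y T\<bar> \<le> b" using absb[OF yT y0] by auto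
  have cost: "cost_la 1 1 nrm c T x = expect_r (\<lambda>r. Hs r + Mv r)"
  proof -
    have "(\<lambda>r. \<Sum>t=1..T. c t (x r (t + 1)) + 1 * nrm (x r (t + 1) - (if t = 1 then 0 else x r (t + 1 - 1))))
        = (\<lambda>r. Hs r + Mv r)"
    proof (rule ext)
      fix r
      have "(\<Sum>t=1..T. c t (x r (t + 1)) + 1 * nrm (x r (t + 1) - (if t = 1 then 0 else x r (t + 1 - 1))))
          = (\<Sum>t=1..T. c t (x r (t + 1)) + \<bar>x r (t + 1) - (if t = 1 then 0 else x r t)\<bar> * n)"
        by (simp only: nrm_eq mult_1 add_diff_cancel_right')
      then show "(\<Sum>t=1..T. c t (x r (t + 1)) + 1 * nrm (x r (t + 1) - (if t = 1 then 0 else x r (t + 1 - 1))))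
          = Hs r + Mv r" unfolding Hs_def Mv_def by (simp only: sum.distrib)
    qed
    then show ?thesis unfolding cost_la_def by simp
  qed
  show ?thesis
  proof (cases "integrable (uniform_measure lborel {-1<..<1}) (\<lambda>r. Hs r + Mv r)")
    case False
    then have "cost_la 1 1 nrm c T x = 0" unfolding cost expect_r_def by (rule not_integrable_integral_eq)
    moreover have "0 \<le> \<rho> * Pa + (2 * s * b + 2 * n * b)"
      using \<rho>0 Pa0 s_pos n_pos a0 ab by simp
    ultimately show ?thesis unfolding \<rho>_def Pa_def by simp
  next
    case True
    have Mvm: "Mv \<in> borel_measurable borel" unfolding Mv_def[abs_def] by (rule Mv_meas[OF meas])
    have Mvb: "\<bar>Mv r\<bar> \<le> (\<Sum>t=1..T. b * n)" if r: "r \<in> {-1<..<1}" for r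
    proof -
      have le: "\<bar>x r (t + 1) - (if t = 1 then 0 else x r t)\<bar> * n \<le> b * n" if t: "t \<in> {1..T}" for t
      proof -
        have "\<bar>x r (t + 1) - (if t = 1 then 0 else x r t)\<bar> \<le> b"
          using x_in[of t r] x_in[of "t + 1" r] r t a0 by auto
        then show ?thesis using n_pos by (intro mult_right_mono) auto
      qed
      have "0 \<le> Mv r" unfolding Mv_def using n_pos by (intro sum_nonneg) auto
      moreover have "Mv r \<le> (\<Sum>t=1..T. b * n)" unfolding Mv_def by (rule sum_mono) (rule le)
      ultimately show ?thesis by simp
    qed
    have iMv: "integrable (uniform_measure lborel {-1<..<1}) Mv" by (rule bridge(1)[OF Mvm Mvb])
    have iMv': "integrable (uniform_measure lborel {-1<..<1}) Mv'"
      unfolding Mv'_def[abs_def] by (rule mov_expect(1)[OF meas])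
    have eMv': "expect_r Mv' \<le> n * b + n * (W T a + W T b) / (2 * s)"
      unfolding Mv'_def[abs_def] by (rule mov_expect(2)[OF meas])
    have iHs: "integrable (uniform_measure lborel {-1<..<1}) Hs"
      using Bochner_Integration.integrable_diff[OF True iMv] by simp
    have split: "expect_r (\<lambda>r. Hs r + Mv r) = expect_r Hs + expect_r Mv"
      unfolding expect_r_def by (rule Bochner_Integration.integral_add[OF iHs iMv])
    have hHs: "Hs r \<le> Pt + 2 * s * b" if r: "r \<in> {-1<..<1}" for r
    proof -
      have "Hs r \<le> m T r - m 0 r" unfolding Hs_def by (rule hit_sum[OF r])
      moreover have "m 0 r \<ge> 0" by (rule m0_nonneg[OF r])
      moreover have "m T r \<le> W T a + s * b" by (rule mT_le[OF r])
      moreover have "W T a \<le> Pt + s * \<bar>a - y T\<bar>" unfolding Pt_def by (rule path_bound[OF y0 yin])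
      moreover have "s * \<bar>a - y T\<bar> \<le> s * b" using ay s_pos by (intro mult_left_mono) auto
      ultimately show ?thesis by linarith
    qed
    have eHs: "expect_r Hs \<le> Pt + 2 * s * b"
    proof -
      have "expect_r Hs \<le> expect_r (\<lambda>_. Pt + 2 * s * b)"
        by (rule expect_mono[OF iHs expect_const(1) hHs])
      then show ?thesis using expect_const(2) by simp
    qed
    have hMv: "Mv r \<le> Mv' r" if r: "r \<in> {-1<..<1}" for r
    proof -
      have le: "\<bar>x r (t + 1) - (if t = 1 then 0 else x r t)\<bar> * n \<le> n * \<bar>x r (t + 1) - x r t\<bar> + (if t = 1 then n * b else 0)"
        if t: "t \<in> {1..T}" for t
      proof (cases "t = 1")
        case True
        have "\<bar>x r (t + 1)\<bar> \<le> \<bar>x r (t + 1) - x r t\<bar> + \<bar>x r t\<bar>" by linarith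
        moreover have "\<bar>x r t\<bar> \<le> b" using x_in[of t r] r t a0 by auto
        ultimately have "\<bar>x r (t + 1)\<bar> * n \<le> (\<bar>x r (t + 1) - x r t\<bar> + b) * n"
          using n_pos by (intro mult_right_mono) auto
        then show ?thesis using True by (simp add: algebra_simps)
      qed simp
      have "Mv r \<le> (\<Sum>t=1..T. n * \<bar>x r (t + 1) - x r t\<bar> + (if t = 1 then n * b else 0))"
        unfolding Mv_def by (rule sum_mono) (rule le)
      also have "\<dots> = (\<Sum>t=1..T. n * \<bar>x r (t + 1) - x r t\<bar>) + (\<Sum>t=1..T. (if t = 1 then n * b else 0))"
        by (rule sum.distrib)
      also have "(\<Sum>t=1..T. (if t = 1 then n * b else 0)) = (if 1 \<in> {1..T} then n * b else 0)"
        by (rule sum.delta) simp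
      moreover have "0 \<le> n * b" using n_pos a0 ab by simp
      ultimately show ?thesis unfolding Mv'_def
        by (auto split: if_splits)
    qed
    have eMv: "expect_r Mv \<le> expect_r Mv'" by (rule expect_mono[OF iMv iMv' hMv])
    have WW: "W T a + W T b \<le> 2 * Pt + 2 * s * b"
    proof -
      have "W T a \<le> Pt + s * \<bar>a - y T\<bar>" unfolding Pt_def by (rule path_bound[OF y0 yin])
      moreover have "W T b \<le> Pt + s * \<bar>b - y T\<bar>" unfolding Pt_def by (rule path_bound[OF y0 yin])
      moreover have "s * \<bar>a - y T\<bar> \<le> s * b" "s * \<bar>b - y T\<bar> \<le> s * b"
        using ay s_pos by (intro mult_left_mono; auto)+
      ultimately show ?thesis by linarith
    qed
    have q1: "n * (W T a + W T b) / (2 * s) \<le> n * (2 * Pt + 2 * s * b) / (2 * s)"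
      using WW n_pos s_pos by (intro divide_right_mono mult_left_mono) auto
    have q2: "n * (2 * Pt + 2 * s * b) / (2 * s) = Pt / \<theta> + n * b"
      unfolding s_def using n_pos th by (simp add: field_simps)
    have "cost_la 1 1 nrm c T x \<le> Pt + 2 * s * b + (n * b + (Pt / \<theta> + n * b))"
      using cost split eHs eMv eMv' q1 q2 by linarith
    moreover have "Pt + Pt / \<theta> = (1 + 1 / \<theta>) * Pt" by (simp add: algebra_simps)
    ultimately show ?thesis using PtPa unfolding \<rho>_def Pa_def by linarith
  qed
qed

lemma G_nonneg: "G \<ge> 0"
proof -
  have "\<exists>g. \<bar>g\<bar> \<le> G \<and> is_subgradient {a..b} (c 0) a g" using costs ab unfolding soco_costs_def by auto
  then show ?thesis by auto
qed

lemma B_nonneg: "B \<ge> 0"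
  using soco_Lip(3)[OF costs, of a 0] soco_Lip(4)[OF costs, of a 0] ab by auto

lemma Mv0_shift:
  "(\<Sum>t=1..Suc T. \<bar>x r t - (if t = 1 then 0 else x r (t - 1))\<bar> * n)
     = \<bar>x r 1\<bar> * n + (\<Sum>t=1..T. n * \<bar>x r (t + 1) - x r t\<bar>)"
proof (induction T)
  case 0 then show ?case by simp
next
  case (Suc T)
  have "(\<Sum>t=1..Suc (Suc T). \<bar>x r t - (if t = 1 then 0 else x r (t - 1))\<bar> * n)
      = (\<Sum>t=1..Suc T. \<bar>x r t - (if t = 1 then 0 else x r (t - 1))\<bar> * n) + \<bar>x r (Suc (Suc T)) - x r (Suc T)\<bar> * n"
    by (simp add: sum.cl_ivl_Suc)
  moreover have "(\<Sum>t=1..Suc T. n * \<bar>x r (t + 1) - x r t\<bar>) = (\<Sum>t=1..T. n * \<bar>x r (t + 1) - x r t\<bar>) + n * \<bar>x r (Suc (Suc T)) - x r (Suc T)\<bar>"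
    by (simp add: sum.cl_ivl_Suc)
  ultimately show ?case using Suc.IH by (simp add: algebra_simps)
qed

lemma part2:
  assumes meas[measurable]: "\<And>t. (\<lambda>r. x r t) \<in> borel_measurable borel" and xs: "xs \<in> {a..b}"
  shows "cost_la 0 1 nrm c T x - (\<Sum>t=1..T. c t xs)
     \<le> (3 * n * b + 3 * (G + n) * b + (G / n + 1) * B) * max (real T / \<theta>) \<theta>"
proof -
  define Mv' where "Mv' r = n * b + (\<Sum>t=1..T. n * \<bar>x r (t + 1) - x r t\<bar>)" for r
  define Cs where "Cs = (\<Sum>t=1..T. c t xs)"
  define \<Phi> where "\<Phi> r = (\<Sum>t=1..T. c t (x r (t + 0)) + 1 * nrm (x r (t + 0) - (if t = 1 then 0 else x r (t + 0 - 1))))" for r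
  define k where "k = G / n + 1"
  define K where "K = 3 * n * b + 3 * (G + n) * b + (G / n + 1) * B"
  define M where "M = max (real T / \<theta>) \<theta>"
  have G0: "G \<ge> 0" by (rule G_nonneg)
  have B0: "B \<ge> 0" by (rule B_nonneg)
  have k0: "k \<ge> 1" unfolding k_def using G0 n_pos by simp
  have b0: "b \<ge> 0" using a0 ab by simp
  have K0: "K \<ge> 0" unfolding K_def using G0 B0 n_pos b0 by simp
  have M1: "M \<ge> \<theta>" "M \<ge> real T / \<theta>" "M \<ge> 1" unfolding M_def using th by auto
  have Cs0: "Cs \<ge> 0" unfolding Cs_def using soco_Lip(3)[OF costs] xs by (intro sum_nonneg) auto
  have CsB: "Cs \<le> real T * B" unfolding Cs_def
    using sum_mono[of "{1..T}" "\<lambda>t. c t xs" "\<lambda>t. B"] soco_Lip(4)[OF costs] xs by auto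
  have cost: "cost_la 0 1 nrm c T x = expect_r \<Phi>" unfolding cost_la_def \<Phi>_def by simp
  define ys where "ys t = (if t = 0 then 0 else xs)" for t :: nat
  have ys0: "ys 0 = 0" and ysin: "\<forall>t\<in>{1..T}. ys t \<in> {a..b}" using xs unfolding ys_def by auto
  have Pys: "P T ys \<le> Cs + s * b"
  proof -
    have "P T ys = (\<Sum>t=1..T. c t xs + (if t = 1 then s * \<bar>xs\<bar> else 0))"
      unfolding P_def ys_def by (rule sum.cong) auto
    also have "\<dots> = Cs + (\<Sum>t=1..T. (if t = 1 then s * \<bar>xs\<bar> else 0))"
      unfolding Cs_def by (rule sum.distrib)
    also have "(\<Sum>t=1..T. (if t = 1 then s * \<bar>xs\<bar> else 0)) = (if 1 \<in> {1..T} then s * \<bar>xs\<bar> else 0)"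
      by (rule sum.delta) simp
    finally show ?thesis using s_pos xs a0 by (auto split: if_splits)
  qed
  have WTz: "W T z \<le> Cs + 2 * s * b" if z: "z \<in> {a..b}" for z
  proof -
    have "W T z \<le> P T ys + s * \<bar>z - ys T\<bar>" by (rule path_bound[OF ys0 ysin])
    moreover have "\<bar>z - ys T\<bar> \<le> b" using z xs a0 unfolding ys_def by auto
    then have "s * \<bar>z - ys T\<bar> \<le> s * b" using s_pos by (intro mult_left_mono) auto
    ultimately show ?thesis using Pys by linarith
  qed
  have iMv': "integrable (uniform_measure lborel {-1<..<1}) Mv'"
    unfolding Mv'_def[abs_def] by (rule mov_expect(1)[OF meas])
  have eMv': "expect_r Mv' \<le> n * b + n * (W T a + W T b) / (2 * s)"
    unfolding Mv'_def[abs_def] by (rule mov_expect(2)[OF meas])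
  have eMv'2: "expect_r Mv' \<le> 3 * n * b + real T * B / \<theta>"
  proof -
    have "W T a + W T b \<le> 2 * real T * B + 4 * s * b" using WTz[of a] WTz[of b] ab CsB by auto
    then have "n * (W T a + W T b) / (2 * s) \<le> n * (2 * real T * B + 4 * s * b) / (2 * s)"
      using n_pos s_pos by (intro divide_right_mono mult_left_mono) auto
    also have "\<dots> = real T * B / \<theta> + 2 * n * b" unfolding s_def using n_pos th by (simp add: field_simps)
    finally show ?thesis using eMv' by linarith
  qed
  have hPhi: "\<Phi> r \<le> Cs + 3 * s * b + k * Mv' r" if r: "r \<in> {-1<..<1}" for r
  proof -
    have xin: "t \<ge> 1 \<Longrightarrow> x r t \<in> {a..b}" for t using x_in r by blast
    have D0: "0 \<le> (\<Sum>t=1..T. n * \<bar>x r (t + 1) - x r t\<bar>)" using n_pos by (intro sum_nonneg) auto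
    have "\<Phi> r = (\<Sum>t=1..T. c t (x r t)) + (\<Sum>t=1..T. \<bar>x r t - (if t = 1 then 0 else x r (t - 1))\<bar> * n)"
      unfolding \<Phi>_def by (simp only: nrm_eq mult_1 add_0_right sum.distrib)
    moreover have "(\<Sum>t=1..T. c t (x r t)) \<le> (\<Sum>t=1..T. c t (x r (t + 1))) + (G / n) * (\<Sum>t=1..T. n * \<bar>x r (t + 1) - x r t\<bar>)"
    proof -
      have "(\<Sum>t=1..T. c t (x r t)) \<le> (\<Sum>t=1..T. c t (x r (t + 1)) + G * \<bar>x r (t + 1) - x r t\<bar>)"
      proof (rule sum_mono)
        fix t assume t: "t \<in> {1..T}"
        have "\<bar>c t (x r t) - c t (x r (t + 1))\<bar> \<le> G * \<bar>x r t - x r (t + 1)\<bar>"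
          using soco_Lip(1)[OF costs, of t] xin[of t] xin[of "t + 1"] t unfolding LipOn_def by auto
        then show "c t (x r t) \<le> c t (x r (t + 1)) + G * \<bar>x r (t + 1) - x r t\<bar>"
          by (simp add: abs_le_iff abs_minus_commute)
      qed
      also have "\<dots> = (\<Sum>t=1..T. c t (x r (t + 1))) + (G / n) * (\<Sum>t=1..T. n * \<bar>x r (t + 1) - x r t\<bar>)"
        using n_pos by (simp add: sum.distrib sum_distrib_left)
      finally show ?thesis .
    qed
    moreover have "(\<Sum>t=1..T. c t (x r (t + 1))) \<le> Cs + 3 * s * b"
    proof -
      have "(\<Sum>t=1..T. c t (x r (t + 1))) \<le> m T r - m 0 r" by (rule hit_sum[OF r])
      moreover have "m 0 r \<ge> 0" by (rule m0_nonneg[OF r])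
      moreover have "m T r \<le> W T a + s * b" by (rule mT_le[OF r])
      moreover have "W T a \<le> Cs + 2 * s * b" using WTz[of a] ab by auto
      ultimately show ?thesis by linarith
    qed
    moreover have "(\<Sum>t=1..T. \<bar>x r t - (if t = 1 then 0 else x r (t - 1))\<bar> * n) \<le> Mv' r"
    proof (cases T)
      case 0 then show ?thesis unfolding Mv'_def using n_pos b0 by simp
    next
      case (Suc T')
      have "\<bar>x r 1\<bar> \<le> b" using xin[of 1] a0 by auto
      then have "\<bar>x r 1\<bar> * n \<le> b * n" using n_pos by (intro mult_right_mono) auto
      moreover have "(\<Sum>t=1..T'. n * \<bar>x r (t + 1) - x r t\<bar>) \<le> (\<Sum>t=1..T. n * \<bar>x r (t + 1) - x r t\<bar>)"
        unfolding Suc using n_pos by (intro sum_mono2) auto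
      ultimately show ?thesis unfolding Suc Mv0_shift Mv'_def using Suc by (simp add: algebra_simps)
    qed
    moreover have "G / n * (\<Sum>t=1..T. n * \<bar>x r (t + 1) - x r t\<bar>) \<le> G / n * Mv' r"
      unfolding Mv'_def using G0 n_pos b0 by (intro mult_left_mono) auto
    ultimately show ?thesis unfolding k_def by (simp add: algebra_simps)
  qed
  have "expect_r \<Phi> - Cs \<le> K * M"
  proof (cases "integrable (uniform_measure lborel {-1<..<1}) \<Phi>")
    case False
    then have "expect_r \<Phi> = 0" unfolding expect_r_def by (rule not_integrable_integral_eq)
    moreover have "K * M \<ge> 0" using K0 M1 by simp
    ultimately show ?thesis using Cs0 by simp
  next
    case True
    have iR: "integrable (uniform_measure lborel {-1<..<1}) (\<lambda>r. (Cs + 3 * s * b) + k * Mv' r)"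
      using expect_const(1) iMv' by (intro Bochner_Integration.integrable_add integrable_mult_right) auto
    have "expect_r \<Phi> \<le> expect_r (\<lambda>r. (Cs + 3 * s * b) + k * Mv' r)"
      by (rule expect_mono[OF True iR hPhi])
    also have "expect_r (\<lambda>r. (Cs + 3 * s * b) + k * Mv' r) = (Cs + 3 * s * b) + k * expect_r Mv'"
    proof -
      have "expect_r (\<lambda>r. (Cs + 3 * s * b) + k * Mv' r) = expect_r (\<lambda>_. Cs + 3 * s * b) + expect_r (\<lambda>r. k * Mv' r)"
        unfolding expect_r_def
        by (rule Bochner_Integration.integral_add[OF expect_const(1) integrable_mult_right[OF iMv']])
      then show ?thesis using expect_const(2) unfolding expect_r_def by simp
    qed
    finally have "expect_r \<Phi> - Cs \<le> 3 * s * b + k * expect_r Mv'" by simp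
    also have "k * expect_r Mv' \<le> k * (3 * n * b + real T * B / \<theta>)"
      using eMv'2 k0 by (intro mult_left_mono) auto
    finally have E: "expect_r \<Phi> - Cs \<le> 3 * s * b + k * (3 * n * b + real T * B / \<theta>)" by simp
    have t1: "3 * s * b \<le> 3 * n * b * M"
    proof -
      have "\<theta> * (3 * n * b) \<le> M * (3 * n * b)" using M1 n_pos b0 by (intro mult_right_mono) auto
      then show ?thesis unfolding s_def by (simp add: algebra_simps)
    qed
    have t2: "k * (3 * n * b) \<le> 3 * (G + n) * b * M"
    proof -
      have "k * (3 * n * b) = 3 * (G + n) * b" unfolding k_def using n_pos by (simp add: field_simps)
      also have "\<dots> \<le> 3 * (G + n) * b * M"
      proof -
        have "(3 * (G + n) * b) * 1 \<le> (3 * (G + n) * b) * M" using M1 G0 n_pos b0 by (intro mult_left_mono) auto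
        then show ?thesis by simp
      qed
      finally show ?thesis .
    qed
    have t3: "k * (real T * B / \<theta>) \<le> (G / n + 1) * B * M"
    proof -
      have "k * (real T * B / \<theta>) = (G / n + 1) * B * (real T / \<theta>)" unfolding k_def by simp
      also have "\<dots> \<le> (G / n + 1) * B * M" using M1 G0 n_pos B0 by (intro mult_left_mono) auto
      finally show ?thesis .
    qed
    show ?thesis using E t1 t2 t3 unfolding K_def by (simp add: algebra_simps)
  qed
  then show ?thesis unfolding cost Cs_def K_def M_def .
qed

end


theorem theorem4:
  fixes xL xH G B :: real and nrm :: "real \<Rightarrow> real"
  assumes "0 \<le> xL" and "xL \<le> xH" and "is_norm_real nrm"
  shows
    "(\<forall>\<theta>\<ge>1. \<forall>\<alpha>\<ge>1. \<exists>K. \<forall>T c x.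
        soco_costs xL xH G B c \<longrightarrow>
        rbg_run (\<lambda>z. \<theta> * nrm z) {xL..xH} c x \<longrightarrow>
        (\<forall>t. (\<lambda>r. x r t) \<in> borel_measurable borel) \<longrightarrow>
        cost_la 1 1 nrm c T x
          \<le> (1 + \<theta>) / min \<theta> \<alpha> * OPT_d \<alpha> nrm {xL..xH} c T + K)
   \<and> (\<exists>K. \<forall>\<theta>\<ge>1. \<forall>T c x.
        soco_costs xL xH G B c \<longrightarrow>
        rbg_run (\<lambda>z. \<theta> * nrm z) {xL..xH} c x \<longrightarrow>
        (\<forall>t. (\<lambda>r. x r t) \<in> borel_measurable borel) \<longrightarrow>
        cost_la 0 1 nrm c T x - OPT_s {xL..xH} c T \<le> K * max (real T / \<theta>) \<theta>)"
proof (intro conjI allI impI)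
  fix \<theta> \<alpha> :: real assume th: "\<theta> \<ge> 1" and al: "\<alpha> \<ge> 1"
  show "\<exists>K. \<forall>T c x.
        soco_costs xL xH G B c \<longrightarrow>
        rbg_run (\<lambda>z. \<theta> * nrm z) {xL..xH} c x \<longrightarrow>
        (\<forall>t. (\<lambda>r. x r t) \<in> borel_measurable borel) \<longrightarrow>
        cost_la 1 1 nrm c T x
          \<le> (1 + \<theta>) / min \<theta> \<alpha> * OPT_d \<alpha> nrm {xL..xH} c T + K"
  proof (intro exI allI impI)
    fix T c x
    assume co: "soco_costs xL xH G B c" and ru: "rbg_run (\<lambda>z. \<theta> * nrm z) {xL..xH} c x"
      and me: "\<forall>t. (\<lambda>r. x r t) \<in> borel_measurable borel"
    interpret S: setting xL xH G B \<theta> nrm c x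
      by (rule setting.intro) (use assms th co ru in auto)
    define \<rho> where "\<rho> = (1 + \<theta>) / min \<theta> \<alpha>"
    have \<rho>0: "\<rho> > 0" unfolding \<rho>_def using th al by simp
    define K where "K = 2 * S.s * xH + 2 * S.n * xH"
    define PS where "PS = {(\<Sum>t=1..T. c t (y t) + \<alpha> * nrm (y t - y (t - 1))) | y.
                                y 0 = 0 \<and> (\<forall>t\<in>{1..T}. y t \<in> {xL..xH})}"
    have ne: "PS \<noteq> {}"
    proof -
      define y0 :: "nat \<Rightarrow> real" where "y0 t = (if t = 0 then 0 else xL)" for t
      have "y0 0 = 0 \<and> (\<forall>t\<in>{1..T}. y0 t \<in> {xL..xH})" using assms unfolding y0_def by auto
      then show ?thesis unfolding PS_def by blast
    qed
    have "(cost_la 1 1 nrm c T x - K) / \<rho> \<le> Inf PS"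
    proof (rule cInf_greatest[OF ne])
      fix p assume "p \<in> PS"
      then obtain y where y: "y 0 = 0" "\<forall>t\<in>{1..T}. y t \<in> {xL..xH}"
        and p: "p = (\<Sum>t=1..T. c t (y t) + \<alpha> * nrm (y t - y (t - 1)))" unfolding PS_def by blast
      have "cost_la 1 1 nrm c T x \<le> \<rho> * p + K"
        unfolding p \<rho>_def K_def by (rule S.part1[OF _ al y]) (use me in auto)
      then show "(cost_la 1 1 nrm c T x - K) / \<rho> \<le> p" using \<rho>0 by (simp add: field_simps)
    qed
    then have "cost_la 1 1 nrm c T x \<le> \<rho> * Inf PS + K" using \<rho>0 by (simp add: field_simps)
    moreover have "OPT_d \<alpha> nrm {xL..xH} c T = Inf PS" unfolding OPT_d_def PS_def by simp
    ultimately show "cost_la 1 1 nrm c T x \<le> (1 + \<theta>) / min \<theta> \<alpha> * OPT_d \<alpha> nrm {xL..xH} c T + K"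
      unfolding \<rho>_def by simp
  qed
next
  define n where "n = nrm 1"
  show "\<exists>K. \<forall>\<theta>\<ge>1. \<forall>T c x.
        soco_costs xL xH G B c \<longrightarrow>
        rbg_run (\<lambda>z. \<theta> * nrm z) {xL..xH} c x \<longrightarrow>
        (\<forall>t. (\<lambda>r. x r t) \<in> borel_measurable borel) \<longrightarrow>
        cost_la 0 1 nrm c T x - OPT_s {xL..xH} c T \<le> K * max (real T / \<theta>) \<theta>"
  proof (intro exI allI impI)
    fix \<theta> :: real and T c x
    assume th: "\<theta> \<ge> 1" and co: "soco_costs xL xH G B c" and ru: "rbg_run (\<lambda>z. \<theta> * nrm z) {xL..xH} c x"
      and me: "\<forall>t. (\<lambda>r. x r t) \<in> borel_measurable borel"
    interpret S: setting xL xH G B \<theta> nrm c x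
      by (rule setting.intro) (use assms th co ru in auto)
    define K where "K = 3 * n * xH + 3 * (G + n) * xH + (G / n + 1) * B"
    have Kn: "K = 3 * S.n * xH + 3 * (G + S.n) * xH + (G / S.n + 1) * B"
      unfolding K_def n_def S.n_def by simp
    define M where "M = max (real T / \<theta>) \<theta>"
    have "cost_la 0 1 nrm c T x - K * M \<le> Inf ((\<lambda>z. \<Sum>t=1..T. c t z) ` {xL..xH})"
    proof (rule cInf_greatest)
      show "(\<lambda>z. \<Sum>t=1..T. c t z) ` {xL..xH} \<noteq> {}" using assms by simp
      fix p assume "p \<in> (\<lambda>z. \<Sum>t=1..T. c t z) ` {xL..xH}"
      then obtain z where z: "z \<in> {xL..xH}" and p: "p = (\<Sum>t=1..T. c t z)" by blast
      have "cost_la 0 1 nrm c T x - p \<le> K * M"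
        unfolding p Kn M_def by (rule S.part2[OF _ z]) (use me in auto)
      then show "cost_la 0 1 nrm c T x - K * M \<le> p" by simp
    qed
    then show "cost_la 0 1 nrm c T x - OPT_s {xL..xH} c T \<le> K * max (real T / \<theta>) \<theta>"
      unfolding OPT_s_def M_def by simp
  qed
qed


end
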